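(* Let $\alpha<_c\beta$ with $\beta/\!\!/\alpha$ an nc border strip with $n$ boxes. Then the number of words $w\in CRHW_n$ with $w(\alpha)=\beta$ equals $2^{|NE(\beta/\!\!/\alpha)|}$.
   Context: A composition is a finite sequence $\alpha=(\alpha_1,\dots,\alpha_k)$ of positive integers; $\ell(\alpha)=k$; its diagram is the set of boxes $(i,j)$, $1\le i\le\ell(\alpha)$, $1\le j\le\alpha_i$, rows top to bottom, columns left to right. For compositions $\gamma=(\gamma_1,\dots,\gamma_l)$, $\delta$ write $\gamma\lessdot_c\delta$ if $\delta=(1,\gamma_1,\dots,\gamma_l)$ or $\delta=(\gamma_1,\dots,\gamma_k+1,\dots,\gamma_l)$ with $\gamma_i\ne\gamma_k$ for all $i<k$; $<_c$ is the transitive closure. For $\gamma<_c\delta$, $\delta/\!\!/\gamma$ consists of the boxes of $\delta$ other than $(\ell(\delta)-\ell(\gamma)+i,j)$, $1\le i\le\ell(\gamma)$, $1\le j\le\gamma_i$. $\mathrm{supp}(\beta/\!\!/\alpha)$ is the set of columns containing a box of $\beta/\!\!/\alpha$; interval shape: supp is a set of consecutive integers. nc border strip: an interval shape such that (1) if $(i,1),(i,2)\in\beta/\!\!/\alpha$ then $(i,1)$ is the bottommost box of column 1 of $\beta/\!\!/\alpha$, and (2) if $(i,j),(i,j+1)\in\beta/\!\!/\alpha$ with $j\ge2$ then $(i,j)$ is the topmost box of column $j$ of $\beta/\!\!/\alpha$. $NE(\beta/\!\!/\alpha)$ is the set of $j\in\mathrm{supp}(\beta/\!\!/\alpha)$ such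 that column $j+1$ of $\beta/\!\!/\alpha$ contains at least one box and $i_1<i_2$ for all boxes $(i_1,j+1),(i_2,j)\in\beta/\!\!/\alpha$. Box-adding operators: $\mathfrak t_1(\alpha)=(1,\alpha_1,\dots,\alpha_k)$; for $i\ge2$, $\mathfrak t_i(\alpha)$ increases the leftmost part equal to $i-1$ by $1$, and is $0$ if none; $\mathfrak t_i(0)=0$. A word $w=\mathfrak t_{i_1}\cdots\mathfrak t_{i_n}$ (words are sequences; distinct sequences are distinct words) acts by $w(\alpha)=\mathfrak t_{i_1}(\cdots\mathfrak t_{i_n}(\alpha))$; it is a reverse hookword if $i_1\le\cdots\le i_{k+1}>i_{k+2}>\cdots>i_n$ for some $0\le k\le n-1$; connected if $\{i_1,\dots,i_n\}$ is a set of consecutive integers; $CRHW_n$ is the set of connected reverse hookwords of length $n$. *)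

theory Defs
  imports Main
begin

(* Compositions are lists of positive naturals; row i (1-indexed) has length alpha!(i-1). *)
definition is_comp :: "nat list \<Rightarrow> bool" where
  "is_comp a \<longleftrightarrow> (\<forall>x\<in>set a. 0 < x)"

definition ccover :: "nat list \<Rightarrow> nat list \<Rightarrow> bool" where
  "ccover g d \<longleftrightarrow> d = 1 # g \<or>
     (\<exists>k<length g. d = g[k := g!k + 1] \<and> (\<forall>i<k. g!i \<noteq> g!k))"

definition cless :: "nat list \<Rightarrow> nat list \<Rightarrow> bool" where
  "cless = tranclp ccover"

definition diagram :: "nat list \<Rightarrow> (nat \<times> nat) set" where
  "diagram a = {(i, j). 1 \<le> i \<and> i \<le> length a \<and> 1 \<le> j \<and> j \<le> a!(i-1)}"

definition skew :: "nat list \<Rightarrow> nat list \<Rightarrow> (nat \<times> nat) set" where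
  "skew d g = diagram d -
     {(length d - length g + i, j) | i j. 1 \<le> i \<and> i \<le> length g \<and> 1 \<le> j \<and> j \<le> g!(i-1)}"

definition supp :: "(nat \<times> nat) set \<Rightarrow> nat set" where
  "supp S = snd ` S"

definition interval_shape :: "(nat \<times> nat) set \<Rightarrow> bool" where
  "interval_shape S \<longleftrightarrow> (\<forall>a b c. a \<in> supp S \<and> c \<in> supp S \<and> a \<le> b \<and> b \<le> c \<longrightarrow> b \<in> supp S)"

definition nc_border_strip :: "(nat \<times> nat) set \<Rightarrow> bool" where
  "nc_border_strip S \<longleftrightarrow> interval_shape S \<and>
     (\<forall>i. (i, 1) \<in> S \<and> (i, 2) \<in> S \<longrightarrow> (\<forall>i'. (i', 1) \<in> S \<longrightarrow> i' \<le> i)) \<and>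
     (\<forall>i j. 2 \<le> j \<and> (i, j) \<in> S \<and> (i, j + 1) \<in> S \<longrightarrow> (\<forall>i'. (i', j) \<in> S \<longrightarrow> i \<le> i'))"

definition NE :: "(nat \<times> nat) set \<Rightarrow> nat set" where
  "NE S = {j \<in> supp S. (\<exists>i. (i, j + 1) \<in> S) \<and>
              (\<forall>i1 i2. (i1, j + 1) \<in> S \<and> (i2, j) \<in> S \<longrightarrow> i1 < i2)}"

(* box-adding operator t_i; None plays the role of 0 *)
definition t_op :: "nat \<Rightarrow> nat list \<Rightarrow> nat list option" where
  "t_op i a = (if i = 1 then Some (1 # a)
     else if i \<ge> 2 \<and> (i - 1) \<in> set a
       then (let k = LEAST k. k < length a \<and> a!k = i - 1 in Some (a[k := a!k + 1]))
     else None)"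

definition apply_word :: "nat list \<Rightarrow> nat list \<Rightarrow> nat list option" where
  "apply_word w a = foldr (\<lambda>i r. Option.bind r (t_op i)) w (Some a)"

definition reverse_hookword :: "nat list \<Rightarrow> bool" where
  "reverse_hookword w \<longleftrightarrow> (\<exists>k < length w.
      (\<forall>p. p < k \<longrightarrow> w!p \<le> w!(p+1)) \<and>
      (\<forall>p. k \<le> p \<and> p + 1 < length w \<longrightarrow> w!p > w!(p+1)))"

definition connected_word :: "nat list \<Rightarrow> bool" where
  "connected_word w \<longleftrightarrow> (\<exists>a b. set w = {a..b})"

definition CRHW :: "nat \<Rightarrow> nat list set" where
  "CRHW n = {w. length w = n \<and> (\<forall>i\<in>set w. 1 \<le> i) \<and> reverse_hookword w \<and> connected_word w}"

end

theory Submission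
  imports Defs "HOL-Library.Multiset"
begin

definition step :: "nat \<Rightarrow> nat \<Rightarrow> (nat \<Rightarrow> nat) \<Rightarrow> (nat \<Rightarrow> nat) option" where
 "step L i h = (if i = 1 then (if \<exists>r<L. h r = 0 then Some (h((GREATEST r. r<L \<and> h r = 0) := 1)) else None)
   else if 2 \<le> i \<and> (\<exists>r<L. h r = i - 1) then Some (h((LEAST r. r<L \<and> h r = i - 1) := i)) else None)"

definition process :: "nat \<Rightarrow> nat list \<Rightarrow> (nat \<Rightarrow> nat) \<Rightarrow> (nat \<Rightarrow> nat) option" where
 "process L w h = foldr (\<lambda>i r. Option.bind r (step L i)) w (Some h)"

lemma process_Nil[simp]: "process L [] h = Some h"
  by (simp add: process_def)

lemma process_Cons[simp]: "process L (i#w) h = Option.bind (process L w h) (step L i)"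
  by (simp add: process_def)

lemma foldr_None: "foldr (\<lambda>i r. Option.bind r (step L i)) u None = None"
  by (induction u) auto

lemma process_append: "process L (u@v) h = Option.bind (process L v h) (process L u)"
proof (cases "process L v h")
  case None
  then show ?thesis by (simp add: process_def foldr_None)
next
  case (Some a)
  then show ?thesis by (simp add: process_def)
qed

lemma step_SomeD:
  assumes "step L i h = Some h'"
  shows "\<exists>y<L. h y = i - 1 \<and> 1 \<le> i \<and> h' = h(y := i) \<and>
     (i = 1 \<longrightarrow> (\<forall>r<L. h r = 0 \<longrightarrow> r \<le> y)) \<and> (2 \<le> i \<longrightarrow> (\<forall>r<L. h r = i-1 \<longrightarrow> y \<le> r))"
proof (cases "i = 1")
  case True
  then have ex: "\<exists>r<L. h r = 0" and h': "h' = h((GREATEST r. r<L \<and> h r = 0) := 1)"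
    using assms by (auto simp: step_def split: if_splits)
  define y where "y = (GREATEST r. r<L \<and> h r = 0)"
  from ex obtain r0 where r0: "r0 < L" "h r0 = 0" by blast
  have P: "y < L \<and> h y = 0" unfolding y_def
    by (rule GreatestI_nat[of _ r0 L]) (use r0 in auto)
  have "\<forall>r<L. h r = 0 \<longrightarrow> r \<le> y" unfolding y_def
    by (auto intro: Greatest_le_nat[of _ _ L])
  then show ?thesis using P True h' y_def by auto
next
  case False
  then have i2: "2 \<le> i" and ex: "\<exists>r<L. h r = i - 1" and h': "h' = h((LEAST r. r<L \<and> h r = i - 1) := i)"
    using assms by (auto simp: step_def split: if_splits)
  define y where "y = (LEAST r. r<L \<and> h r = i - 1)"
  have P: "y < L \<and> h y = i - 1" unfolding y_def by (rule LeastI_ex) (use ex in auto)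
  have "\<forall>r<L. h r = i - 1 \<longrightarrow> y \<le> r" unfolding y_def by (auto intro: Least_le)
  then show ?thesis using P i2 h' y_def by auto
qed

lemma step_greatest:
  assumes "y < L" "h y = 0" "\<forall>r<L. h r = 0 \<longrightarrow> r \<le> y"
  shows "step L 1 h = Some (h(y := 1))"
proof -
  have "(GREATEST r. r<L \<and> h r = 0) = y"
    by (rule Greatest_equality) (use assms in auto)
  then show ?thesis using assms by (auto simp: step_def)
qed

lemma step_least:
  assumes "2 \<le> i" "y < L" "h y = i - 1" "\<forall>r<L. h r = i - 1 \<longrightarrow> y \<le> r"
  shows "step L i h = Some (h(y := i))"
proof -
  have "(LEAST r. r<L \<and> h r = i - 1) = y"
    by (rule Least_equality) (use assms in auto)
  then show ?thesis using assms by (auto simp: step_def)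
qed

lemma process_mono:
  "process L w h = Some h' \<Longrightarrow> (\<forall>r. h r \<le> h' r) \<and> (\<forall>r. L \<le> r \<longrightarrow> h' r = h r)"
proof (induction w arbitrary: h')
  case Nil then show ?case by simp
next
  case (Cons i w)
  then obtain h1 where h1: "process L w h = Some h1" "step L i h1 = Some h'"
    by (cases "process L w h") auto
  from step_SomeD[OF h1(2)] obtain y where y: "y<L" "h1 y = i - 1" "1 \<le> i" "h' = h1(y := i)" by blast
  have "h1 y \<le> i" using y by simp
  then show ?case using Cons.IH[OF h1(1)] y
    by (auto intro: order_trans)
qed

lemma process_pass:
  "process L w h = Some h' \<Longrightarrow> h r < j \<Longrightarrow> j \<le> h' r \<Longrightarrow> j \<in> set w"
proof (induction w arbitrary: h' j)
  case Nil then show ?case by simp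
next
  case (Cons i w)
  then obtain h1 where h1: "process L w h = Some h1" "step L i h1 = Some h'"
    by (cases "process L w h") auto
  from step_SomeD[OF h1(2)] obtain y where y: "y<L" "h1 y = i - 1" "1 \<le> i" "h' = h1(y := i)" by blast
  show ?case
  proof (cases "j \<le> h1 r")
    case True then show ?thesis using Cons.IH[OF h1(1) Cons.prems(2)] by simp
  next
    case False
    then have "r = y" using Cons.prems y by (auto split: if_splits)
    then show ?thesis using False Cons.prems y by auto
  qed
qed



lemma process_count:
  "process L w h = Some h' \<Longrightarrow> count_list w j = card {r. r < L \<and> h r < j \<and> j \<le> h' r}"
proof (induction w arbitrary: h')
  case Nil
  have "{r. r < L \<and> h r < j \<and> j \<le> h r} = {}" by auto
  then show ?case using Nil by simp
next
  case (Cons i w)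
  then obtain h1 where h1: "process L w h = Some h1" "step L i h1 = Some h'"
    by (cases "process L w h") auto
  from step_SomeD[OF h1(2)] obtain y where y: "y<L" "h1 y = i - 1" "1 \<le> i" "h' = h1(y := i)" by blast
  have m: "\<forall>r. h r \<le> h1 r" using process_mono[OF h1(1)] by blast
  define A where "A = {r. r < L \<and> h r < j \<and> j \<le> h1 r}"
  have fin: "finite A" unfolding A_def by simp
  show ?case
  proof (cases "j = i")
    case True
    have "h y \<le> h1 y" using m by blast
    then have "h y < i" using y by simp
    then have "{r. r < L \<and> h r < j \<and> j \<le> h' r} = insert y A"
      using y m True unfolding A_def by (auto split: if_splits intro: le_trans)
    moreover have "y \<notin> A" using y True unfolding A_def by auto
    ultimately show ?thesis using Cons.IH[OF h1(1)] True fin A_def by simp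
  next
    case False
    have "{r. r < L \<and> h r < j \<and> j \<le> h' r} = A"
      using y m False unfolding A_def by (auto split: if_splits)
    then show ?thesis using Cons.IH[OF h1(1)] False A_def by simp
  qed
qed

lemma process_high:
  "process L w h = Some h' \<Longrightarrow> \<forall>x\<in>set w. k < x \<Longrightarrow> h r < k \<Longrightarrow> h' r = h r"
proof (induction w arbitrary: h')
  case Nil then show ?case by simp
next
  case (Cons i w)
  then obtain h1 where h1: "process L w h = Some h1" "step L i h1 = Some h'"
    by (cases "process L w h") auto
  from step_SomeD[OF h1(2)] obtain y where y: "y<L" "h1 y = i - 1" "1 \<le> i" "h' = h1(y := i)" by blast
  have "h1 r = h r" using Cons.IH[OF h1(1)] Cons.prems by auto
  moreover have "k < i" using Cons.prems by auto
  ultimately have "r \<noteq> y" using y Cons.prems by auto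
  then show ?case using y \<open>h1 r = h r\<close> by simp
qed

lemma process_frozen:
  "process L w p = Some h \<Longrightarrow> u < L \<Longrightarrow> r < L \<Longrightarrow> 1 \<le> v \<Longrightarrow> p u = v \<Longrightarrow> h u = v \<Longrightarrow>
   p r \<le> v \<Longrightarrow> v < h r \<Longrightarrow> r < u"
proof (induction w arbitrary: h)
  case Nil then show ?case by simp
next
  case (Cons i w)
  then obtain h1 where h1: "process L w p = Some h1" "step L i h1 = Some h"
    by (cases "process L w p") auto
  from step_SomeD[OF h1(2)] obtain y where y: "y<L" "h1 y = i - 1" "1 \<le> i" "h = h1(y := i)"
    "(i = 1 \<longrightarrow> (\<forall>r<L. h1 r = 0 \<longrightarrow> r \<le> y))" "(2 \<le> i \<longrightarrow> (\<forall>r<L. h1 r = i-1 \<longrightarrow> y \<le> r))" by blast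
  have m: "\<forall>r. p r \<le> h1 r" using process_mono[OF h1(1)] by blast
  have uy: "u \<noteq> y"
  proof
    assume "u = y"
    then have "p y = i" using Cons.prems y by simp
    moreover have "p y \<le> h1 y" using m by blast
    ultimately show False using y by simp
  qed
  then have hu: "h1 u = v" using Cons.prems y by simp
  show ?case
  proof (cases "r = y")
    case False
    then show ?thesis using Cons.IH[OF h1(1)] Cons.prems hu y by auto
  next
    case True
    then have "v < i" using Cons.prems y by simp
    show ?thesis
    proof (cases "v < i - 1")
      case True
      then show ?thesis using Cons.IH[OF h1(1)] Cons.prems hu y \<open>r = y\<close> by auto
    next
      case False
      then have "v = i - 1" "2 \<le> i" using \<open>v < i\<close> Cons.prems by auto
      then have "y \<le> u" using y hu Cons.prems by auto
      then show ?thesis using uy \<open>r = y\<close> by simp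
    qed
  qed
qed



lemma fin_L[simp]: "finite {r::nat. r<L \<and> P r}"
  by (rule finite_subset[of _ "{..<L}"]) auto

lemma count_shift:
  fixes L y x j :: nat and h g :: "nat \<Rightarrow> nat"
  assumes "y < L" "h y = x - 1" "1 \<le> x" "g y = x"
  shows "card {r. r<L \<and> h r < j \<and> j \<le> g r} = card {r. r<L \<and> (h(y:=x)) r < j \<and> j \<le> g r} + (if j = x then 1 else 0)"
proof -
  define A where "A = {r. r<L \<and> (h(y:=x)) r < j \<and> j \<le> g r}"
  have yA: "y \<notin> A" using assms unfolding A_def by simp
  have fA: "finite A" unfolding A_def by simp
  show ?thesis
  proof (cases "j = x")
    case True
    then have "{r. r<L \<and> h r < j \<and> j \<le> g r} = insert y A"
      using assms unfolding A_def by (auto split: if_splits)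
    then show ?thesis using yA fA True A_def by simp
  next
    case False
    then have "{r. r<L \<and> h r < j \<and> j \<le> g r} = A"
      using assms unfolding A_def by (auto split: if_splits)
    then show ?thesis using False A_def by simp
  qed
qed

definition SWC :: "nat \<Rightarrow> (nat \<Rightarrow> nat) \<Rightarrow> (nat \<Rightarrow> nat) \<Rightarrow> nat list \<Rightarrow> bool" where
  "SWC L h g u \<longleftrightarrow> (\<forall>r. L \<le> r \<longrightarrow> h r = g r) \<and> (\<forall>r<L. h r \<le> g r \<and> g r \<le> Suc (h r)) \<and>
     (\<forall>j. count_list u j = card {r. r<L \<and> h r < j \<and> j \<le> g r}) \<and>
     (\<forall>j r q. 2 \<le> j \<longrightarrow> r<L \<longrightarrow> q<L \<longrightarrow> h r = j-1 \<longrightarrow> h q = j-1 \<longrightarrow> g r = j \<longrightarrow> g q = j-1 \<longrightarrow> r < q)"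

lemma card_pos_ex: "0 < card {r::nat. r<L \<and> P r} \<Longrightarrow> \<exists>r<L. P r"
proof -
  assume "0 < card {r. r<L \<and> P r}"
  then have "{r. r<L \<and> P r} \<noteq> {}" by (metis card.empty less_irrefl)
  then show ?thesis by blast
qed

lemma card_pos_in: "(y::nat) < L \<Longrightarrow> P y \<Longrightarrow> 0 < card {r. r<L \<and> P r}"
  by (rule card_gt_0_iff[THEN iffD2]) auto

lemma count_pos_in: "0 < count_list u x \<Longrightarrow> x \<in> set u"
  using count_list_0_iff by (metis less_irrefl)

lemma sweep_fwd:
  "sorted u \<Longrightarrow> process L u h = Some g \<Longrightarrow> SWC L h g u"
proof (induction u arbitrary: h rule: rev_induct)
  case Nil
  then show ?case by (auto simp: SWC_def)
next
  case (snoc x u')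
  have su: "sorted u'" and le: "\<forall>z\<in>set u'. z \<le> x" using snoc.prems(1) by (auto simp: sorted_append)
  from snoc.prems(2) obtain h1 where h1: "step L x h = Some h1" "process L u' h1 = Some g"
    by (cases "step L x h") (auto simp: process_append)
  from step_SomeD[OF h1(1)] obtain y where y: "y<L" "h y = x - 1" "1 \<le> x" "h1 = h(y := x)"
    "(x = 1 \<longrightarrow> (\<forall>r<L. h r = 0 \<longrightarrow> r \<le> y))" "(2 \<le> x \<longrightarrow> (\<forall>r<L. h r = x-1 \<longrightarrow> y \<le> r))" by blast
  have IH: "SWC L h1 g u'" using snoc.IH[OF su h1(2)] .
  have IH0: "\<forall>r. L \<le> r \<longrightarrow> h1 r = g r" using IH unfolding SWC_def by blast
  have IH1: "\<forall>r<L. h1 r \<le> g r \<and> g r \<le> Suc (h1 r)" using IH unfolding SWC_def by blast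
  have IH2: "\<forall>j. count_list u' j = card {r. r<L \<and> h1 r < j \<and> j \<le> g r}" using IH unfolding SWC_def by blast
  have IH3: "\<And>j r q. 2 \<le> j \<Longrightarrow> r<L \<Longrightarrow> q<L \<Longrightarrow> h1 r = j-1 \<Longrightarrow> h1 q = j-1 \<Longrightarrow> g r = j \<Longrightarrow> g q = j-1 \<Longrightarrow> r < q"
    using IH unfolding SWC_def by blast
  have gy1: "x \<le> g y" "g y \<le> Suc x" using IH1 y by auto
  have gy: "g y = x"
  proof (rule ccontr)
    assume "g y \<noteq> x"
    then have "g y = Suc x" using gy1 by simp
    then have "y < L \<and> h1 y < Suc x \<and> Suc x \<le> g y" using y by simp
    then have "0 < card {r. r<L \<and> h1 r < Suc x \<and> Suc x \<le> g r}"
      using card_pos_in[of y L "\<lambda>r. h1 r < Suc x \<and> Suc x \<le> g r"] by blast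
    then have "0 < count_list u' (Suc x)" using IH2 by simp
    then have "Suc x \<in> set u'" by (rule count_pos_in)
    then show False using le by auto
  qed
  have cs: "\<And>j. card {r. r<L \<and> h r < j \<and> j \<le> g r} = card {r. r<L \<and> h1 r < j \<and> j \<le> g r} + (if j = x then 1 else 0)"
    using count_shift[of y L h x g, OF y(1) y(2) y(3) gy] y(4) by simp
  have A0: "\<forall>r. L \<le> r \<longrightarrow> h r = g r"
  proof (intro allI impI)
    fix r assume "L \<le> r" then show "h r = g r" using IH0 y by auto
  qed
  have A1: "\<forall>r<L. h r \<le> g r \<and> g r \<le> Suc (h r)"
  proof (intro allI impI)
    fix r assume r: "r < L"
    show "h r \<le> g r \<and> g r \<le> Suc (h r)"
    proof (cases "r = y")
      case True then show ?thesis using y gy by simp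
    next
      case False then have "h1 r = h r" using y by simp
      then show ?thesis using IH1 r by metis
    qed
  qed
  have A2: "\<forall>j. count_list (u' @ [x]) j = card {r. r < L \<and> h r < j \<and> j \<le> g r}"
    using IH2 cs by simp
  have A3: "\<forall>j r q. 2 \<le> j \<longrightarrow> r<L \<longrightarrow> q<L \<longrightarrow> h r = j-1 \<longrightarrow> h q = j-1 \<longrightarrow> g r = j \<longrightarrow> g q = j-1 \<longrightarrow> r < q"
  proof (intro allI impI)
    fix j r q assume a: "2 \<le> j" "r < L" "q < L" "h r = j - 1" "h q = j - 1" "g r = j" "g q = j - 1"
    show "r < q"
    proof (cases "r = y \<or> q = y")
      case False
      then show ?thesis using IH3[of j r q] y a by simp
    next
      case True
      then show ?thesis
      proof
        assume "r = y"
        then have "j = x" using a gy by simp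
        then have "y \<le> q" using y a by auto
        moreover have "q \<noteq> y" using a gy \<open>r = y\<close> by auto
        ultimately show ?thesis using \<open>r = y\<close> by simp
      next
        assume "q = y"
        then show ?thesis using a gy y by simp
      qed
    qed
  qed
  show ?case unfolding SWC_def using A0 A1 A2 A3 by blast
qed

lemma SWC_D:
  assumes "SWC L h g u"
  shows "\<And>r. L \<le> r \<Longrightarrow> h r = g r" "\<And>r. r<L \<Longrightarrow> h r \<le> g r" "\<And>r. r<L \<Longrightarrow> g r \<le> Suc (h r)"
    "\<And>j. count_list u j = card {r. r<L \<and> h r < j \<and> j \<le> g r}"
    "\<And>j r q. 2 \<le> j \<Longrightarrow> r<L \<Longrightarrow> q<L \<Longrightarrow> h r = j-1 \<Longrightarrow> h q = j-1 \<Longrightarrow> g r = j \<Longrightarrow> g q = j-1 \<Longrightarrow> r < q"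
  using assms unfolding SWC_def by blast+

lemma sweep_bwd:
  "sorted u \<Longrightarrow> \<forall>r<L. 1 \<le> g r \<Longrightarrow> SWC L h g u \<Longrightarrow> process L u h = Some g"
proof (induction u arbitrary: h rule: rev_induct)
  case Nil
  note S = SWC_D[OF Nil(3)]
  have "\<forall>r. h r = g r"
  proof
    fix r show "h r = g r"
    proof (cases "r < L")
      case True
      have "count_list [] (g r) = card {q. q<L \<and> h q < g r \<and> g r \<le> g q}"
        using S(4) by blast
      then have "card {q. q<L \<and> h q < g r \<and> g r \<le> g q} = 0" by simp
      then have "\<not> (h r < g r)" using True card_pos_in[of r L "\<lambda>q. h q < g r \<and> g r \<le> g q"] by auto
      then show ?thesis using S(2)[OF True] by simp
    next
      case False then show ?thesis using S(1) by simp
    qed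
  qed
  then show ?case by (simp add: fun_eq_iff)
next
  case (snoc x u')
  have su: "sorted u'" and le: "\<forall>z\<in>set u'. z \<le> x" using snoc.prems(1) by (auto simp: sorted_append)
  note S = SWC_D[OF snoc.prems(3)]
  have cnt: "\<And>j. count_list (u' @ [x]) j = card {r. r<L \<and> h r < j \<and> j \<le> g r}"
    using S(4) by blast
  have "0 < card {r. r<L \<and> h r < x \<and> x \<le> g r}" using cnt[of x] by simp
  then obtain r0 where r0: "r0 < L" "h r0 < x" "x \<le> g r0" using card_pos_ex[of L "\<lambda>r. h r < x \<and> x \<le> g r"] by blast
  have r0': "h r0 = x - 1" "g r0 = x" "1 \<le> x" using r0 S(3)[OF r0(1)] by auto
  obtain y where y: "y < L" "h y = x - 1" "g y = x" "step L x h = Some (h(y := x))"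
  proof (cases "x = 1")
    case True
    define y where "y = (GREATEST r. r<L \<and> h r = 0)"
    have P: "y < L \<and> h y = 0" unfolding y_def
      by (rule GreatestI_nat[of _ r0 L]) (use r0 r0' True in auto)
    have G: "\<forall>r<L. h r = 0 \<longrightarrow> r \<le> y" unfolding y_def
      by (auto intro: Greatest_le_nat[of _ _ L])
    have "1 \<le> g y" using P snoc.prems(2) by blast
    moreover have "g y \<le> 1" using P S(3)[of y] by simp
    ultimately have "g y = 1" by simp
    then show ?thesis using that[of y] P step_greatest[OF _ _ G] True by auto
  next
    case False
    define y where "y = (LEAST r. r<L \<and> h r = x - 1)"
    have P: "y < L \<and> h y = x - 1" unfolding y_def by (rule LeastI) (use r0 r0' in auto)
    have G: "\<forall>r<L. h r = x - 1 \<longrightarrow> y \<le> r" unfolding y_def by (auto intro: Least_le)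
    have "g y = x"
    proof (rule ccontr)
      assume "g y \<noteq> x"
      moreover have "h y \<le> g y" "g y \<le> Suc (h y)" using S(2)[of y] S(3)[of y] P by auto
      ultimately have "g y = x - 1" using P r0' by auto
      then have "r0 < y" using S(5)[of x r0 y] False r0 r0' P by auto
      then show False using G r0 r0' by fastforce
    qed
    then show ?thesis using that[of y] P step_least[OF _ _ _ G] False r0' by auto
  qed
  define h1 where "h1 = h(y := x)"
  have cs: "\<And>j. card {r. r<L \<and> h r < j \<and> j \<le> g r} = card {r. r<L \<and> h1 r < j \<and> j \<le> g r} + (if j = x then 1 else 0)"
    using count_shift[of y L h x g, OF y(1) y(2) r0'(3) y(3)] h1_def by simp
  have nx: "\<And>r. r < L \<Longrightarrow> h r = x \<Longrightarrow> g r = Suc x \<Longrightarrow> False"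
  proof -
    fix r assume a: "r < L" "h r = x" "g r = Suc x"
    then have "0 < card {r. r<L \<and> h r < Suc x \<and> Suc x \<le> g r}"
      using card_pos_in[of r L "\<lambda>r. h r < Suc x \<and> Suc x \<le> g r"] by simp
    then have "0 < count_list (u' @ [x]) (Suc x)" using cnt[of "Suc x"] by linarith
    then have "Suc x \<in> set (u' @ [x])" by (rule count_pos_in)
    then show False using le by auto
  qed
  have A0: "\<forall>r. L \<le> r \<longrightarrow> h1 r = g r" using S(1) y h1_def by auto
  have A1: "\<forall>r<L. h1 r \<le> g r \<and> g r \<le> Suc (h1 r)"
  proof (intro allI impI)
    fix r assume r: "r < L"
    show "h1 r \<le> g r \<and> g r \<le> Suc (h1 r)"
    proof (cases "r = y")
      case True then show ?thesis using y h1_def by simp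
    next
      case False then have "h1 r = h r" using h1_def by simp
      then show ?thesis using S(2,3) r by metis
    qed
  qed
  have A2: "\<forall>j. count_list u' j = card {r. r < L \<and> h1 r < j \<and> j \<le> g r}"
  proof
    fix j
    have "count_list (u' @ [x]) j = count_list u' j + (if j = x then 1 else 0)" by auto
    then show "count_list u' j = card {r. r < L \<and> h1 r < j \<and> j \<le> g r}" using cnt[of j] cs[of j] by linarith
  qed
  have A3: "\<forall>j r q. 2 \<le> j \<longrightarrow> r<L \<longrightarrow> q<L \<longrightarrow> h1 r = j-1 \<longrightarrow> h1 q = j-1 \<longrightarrow> g r = j \<longrightarrow> g q = j-1 \<longrightarrow> r < q"
  proof (intro allI impI)
    fix j r q assume a: "2 \<le> j" "r < L" "q < L" "h1 r = j - 1" "h1 q = j - 1" "g r = j" "g q = j - 1"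
    show "r < q"
    proof (cases "r = y \<or> q = y")
      case False
      then show ?thesis using S(5)[of j r q] a h1_def by simp
    next
      case True
      then show ?thesis
      proof
        assume "r = y" then show ?thesis using a y h1_def by simp
      next
        assume "q = y"
        then have "j - 1 = x" using a h1_def by simp
        moreover have "r \<noteq> y" using a \<open>q = y\<close> y h1_def by auto
        ultimately show ?thesis using nx[of r] a h1_def by auto
      qed
    qed
  qed
  have S': "SWC L h1 g u'" unfolding SWC_def using A0 A1 A2 A3 by blast
  have "process L u' h1 = Some g" using snoc.IH[OF su snoc.prems(2) S'] .
  then show ?case using y h1_def by (simp add: process_append)
qed



lemma split_desc:
  assumes "sorted_wrt (>) w" "k \<in> set w"
  shows "\<exists>hi lo. w = hi @ k # lo \<and> (\<forall>x\<in>set hi. k < x) \<and> (\<forall>x\<in>set lo. x < k)"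
proof -
  obtain hi lo where w: "w = hi @ k # lo" using split_list[OF assms(2)] by blast
  have "sorted_wrt (>) (hi @ k # lo)" using assms(1) w by simp
  then have "(\<forall>x\<in>set hi. k < x) \<and> (\<forall>x\<in>set lo. x < k)" by (simp add: sorted_wrt_append)
  moreover note w
  ultimately show ?thesis by blast

qed

lemma card1_eq: "card A = 1 \<Longrightarrow> x \<in> A \<Longrightarrow> y \<in> A \<Longrightarrow> x = y"
  by (erule card_1_singletonE) simp

lemma process_ord:
  assumes w: "sorted_wrt (>) w" and p: "process L w h0 = Some h1" and k: "k \<in> set w" "2 \<le> k"
    and x: "x < L" "h0 x < k" "k \<le> h1 x"
    and u: "u < L" "u \<noteq> x" "h0 u \<le> k - 1" "h1 u = k - 1"
  shows "x < u"
proof -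
  obtain hi lo where s: "w = hi @ k # lo" "\<forall>z\<in>set hi. k < z" "\<forall>z\<in>set lo. z < k"
    using split_desc[OF w k(1)] by blast
  obtain hA where hA: "process L lo h0 = Some hA"
    using p s(1) by (cases "process L lo h0") (auto simp: process_append)
  obtain hB where hB: "step L k hA = Some hB"
    using p s(1) hA by (cases "step L k hA") (auto simp: process_append)
  have hC: "process L hi hB = Some h1" using p s(1) hA hB by (simp add: process_append)
  from step_SomeD[OF hB] obtain y where y: "y<L" "hA y = k - 1" "hB = hA(y := k)"
    "(2 \<le> k \<longrightarrow> (\<forall>r<L. hA r = k-1 \<longrightarrow> y \<le> r))" by blast
  have mB: "hB u \<le> h1 u" using process_mono[OF hC] by blast
  have "hB u < k" using mB u k by simp
  then have "h1 u = hB u" using process_high[OF hC s(2)] by blast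
  then have Bu: "hB u = k - 1" using u by simp
  then have uy: "u \<noteq> y" using y k by auto
  then have Au: "hA u = k - 1" using Bu y by simp
  then have yu: "y \<le> u" using y u k by simp
  have "k \<notin> set hi" "k \<notin> set lo" using s by auto
  then have "count_list w k = 1" using s(1) by simp
  then have c1: "card {r. r < L \<and> h0 r < k \<and> k \<le> h1 r} = 1" using process_count[OF p] by simp
  have "h0 y \<le> hA y" using process_mono[OF hA] by blast
  moreover have "hB y \<le> h1 y" using process_mono[OF hC] by blast
  ultimately have "y \<in> {r. r < L \<and> h0 r < k \<and> k \<le> h1 r}" using y k by auto
  moreover have "x \<in> {r. r < L \<and> h0 r < k \<and> k \<le> h1 r}" using x by auto
  ultimately have "x = y" using card1_eq[OF c1] by blast
  then show ?thesis using yu uy by simp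
qed



definition emb :: "nat \<Rightarrow> nat list \<Rightarrow> nat \<Rightarrow> nat" where
  "emb L g = (\<lambda>r. if L - length g \<le> r \<and> r < L then g ! (r - (L - length g)) else 0)"

lemma apply_word_Nil[simp]: "apply_word [] a = Some a"
  by (simp add: apply_word_def)

lemma apply_word_Cons[simp]: "apply_word (i#w) a = Option.bind (apply_word w a) (t_op i)"
  by (simp add: apply_word_def)

lemma t_op_SomeD:
  assumes "is_comp g" "t_op i g = Some d"
  shows "is_comp d \<and> length g \<le> length d \<and> (i = 1 \<longrightarrow> d = 1 # g) \<and>
    (i \<noteq> 1 \<longrightarrow> 2 \<le> i \<and> (i - 1) \<in> set g \<and> d = g[(LEAST k. k < length g \<and> g!k = i - 1) := i])"
proof (cases "i = 1")
  case True
  then show ?thesis using assms by (auto simp: t_op_def is_comp_def)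
next
  case False
  then have i2: "2 \<le> i" "(i - 1) \<in> set g" and d: "d = g[(LEAST k. k < length g \<and> g!k = i - 1) := g!(LEAST k. k < length g \<and> g!k = i - 1) + 1]"
    using assms by (auto simp: t_op_def Let_def split: if_splits)
  define k where "k = (LEAST k. k < length g \<and> g!k = i - 1)"
  have "\<exists>k. k < length g \<and> g!k = i - 1" using i2 by (metis in_set_conv_nth)
  then have K: "k < length g \<and> g!k = i - 1" unfolding k_def by (rule LeastI_ex)
  then have d': "d = g[k := i]" using d k_def i2 by simp
  have "is_comp d" using assms(1) d' i2 unfolding is_comp_def
    using set_update_subset_insert[of g k i] by fastforce
  then show ?thesis using False i2 d' k_def by simp
qed

lemma emb_pos: "is_comp g \<Longrightarrow> length g \<le> L \<Longrightarrow> r < L \<Longrightarrow> (emb L g r = 0 \<longleftrightarrow> r < L - length g)"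
  unfolding emb_def is_comp_def by (auto simp: nth_mem)

lemma step1_corr:
  assumes "is_comp g" "length g < L"
  shows "step L 1 (emb L g) = Some (emb L (1 # g))"
proof -
  define y where "y = L - length g - 1"
  have y: "y < L" "emb L g y = 0" using assms emb_pos[OF assms(1)] unfolding y_def by auto
  have G: "\<forall>r<L. emb L g r = 0 \<longrightarrow> r \<le> y" using emb_pos[OF assms(1)] assms unfolding y_def by fastforce
  have "emb L (1 # g) = (emb L g)(y := 1)"
  proof
    fix r show "emb L (1 # g) r = ((emb L g)(y := 1)) r"
      using assms unfolding emb_def y_def by (auto simp: nth_Cons' Suc_diff_Suc)
  qed
  then show ?thesis using step_greatest[OF y G] by simp
qed

lemma step1_full:
  assumes "is_comp g" "length g = L"
  shows "step L 1 (emb L g) = None"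
proof -
  have "\<forall>r<L. emb L g r \<noteq> 0" using emb_pos[OF assms(1), of L] assms by simp
  then show ?thesis by (auto simp: step_def)
qed

lemma stepi_corr:
  assumes "is_comp g" "length g \<le> L" "2 \<le> i"
  shows "step L i (emb L g) = Option.bind (t_op i g) (\<lambda>d. Some (emb L d))"
proof (cases "(i - 1) \<in> set g")
  case False
  have "\<not> (\<exists>r<L. emb L g r = i - 1)"
  proof
    assume "\<exists>r<L. emb L g r = i - 1"
    then obtain r where r: "r < L" "emb L g r = i - 1" by blast
    then have "L - length g \<le> r" using assms unfolding emb_def by (auto split: if_splits)
    then have "g ! (r - (L - length g)) = i - 1" "r - (L - length g) < length g" using r assms unfolding emb_def by auto
    then show False using False by (metis nth_mem)
  qed
  moreover have "t_op i g = None" using False assms by (simp add: t_op_def)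
  ultimately show ?thesis using assms by (simp add: step_def)
next
  case True
  define k where "k = (LEAST k. k < length g \<and> g!k = i - 1)"
  have "\<exists>k. k < length g \<and> g!k = i - 1" using True by (metis in_set_conv_nth)
  then have K: "k < length g \<and> g!k = i - 1" unfolding k_def by (rule LeastI_ex)
  have Kl: "\<And>k'. k' < length g \<Longrightarrow> g!k' = i - 1 \<Longrightarrow> k \<le> k'" unfolding k_def by (auto intro: Least_le)
  have t: "t_op i g = Some (g[k := i])" using True assms K k_def by (simp add: t_op_def Let_def)
  define y where "y = L - length g + k"
  have y: "y < L" "emb L g y = i - 1" using K assms unfolding y_def emb_def by auto
  have G: "\<forall>r<L. emb L g r = i - 1 \<longrightarrow> y \<le> r"
  proof (intro allI impI)
    fix r assume r: "r < L" "emb L g r = i - 1"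
    then have "L - length g \<le> r" using assms unfolding emb_def by (auto split: if_splits)
    then have "g ! (r - (L - length g)) = i - 1" "r - (L - length g) < length g" using r assms unfolding emb_def by auto
    then have "k \<le> r - (L - length g)" using Kl by blast
    then show "y \<le> r" unfolding y_def using \<open>L - length g \<le> r\<close> by simp
  qed
  have "emb L (g[k := i]) = (emb L g)(y := i)"
  proof
    fix r show "emb L (g[k := i]) r = ((emb L g)(y := i)) r"
      using assms K unfolding emb_def y_def by (auto simp: nth_list_update)
  qed
  then show ?thesis using step_least[OF assms(3) y G] t by simp
qed

lemma step0: "step L 0 h = None" by (simp add: step_def)
lemma t_op0: "t_op 0 g = None" by (simp add: t_op_def)

lemma aw_to_proc:
  "is_comp g \<Longrightarrow> apply_word w g = Some d \<Longrightarrow> length d \<le> L \<Longrightarrow> process L w (emb L g) = Some (emb L d)"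
proof (induction w arbitrary: d)
  case Nil then show ?case by simp
next
  case (Cons i w)
  then obtain d1 where d1: "apply_word w g = Some d1" "t_op i d1 = Some d"
    by (cases "apply_word w g") auto
  have cg: "is_comp d1"
  proof -
    have "\<And>w d. apply_word w g = Some d \<Longrightarrow> is_comp d"
    proof -
      fix w d show "apply_word w g = Some d \<Longrightarrow> is_comp d"
      proof (induction w arbitrary: d)
        case Nil then show ?case using Cons.prems by simp
      next
        case (Cons j w)
        then obtain d2 where "apply_word w g = Some d2" "t_op j d2 = Some d" by (cases "apply_word w g") auto
        then show ?case using Cons.IH t_op_SomeD by blast
      qed
    qed
    then show ?thesis using d1 by blast
  qed
  note T = t_op_SomeD[OF cg d1(2)]
  have l1: "length d1 \<le> L" using T Cons.prems by simp
  have IH: "process L w (emb L g) = Some (emb L d1)" using Cons.IH[OF Cons.prems(1) d1(1) l1] .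
  show ?case
  proof (cases "i = 1")
    case True
    then have "length d1 < L" using T Cons.prems by simp
    then show ?thesis using IH step1_corr[OF cg] True T by simp
  next
    case False
    then show ?thesis using IH stepi_corr[OF cg l1, of i] T d1 by simp
  qed
qed

lemma proc_to_aw:
  "is_comp g \<Longrightarrow> length g \<le> L \<Longrightarrow> process L w (emb L g) = Some h \<Longrightarrow>
   \<exists>d. apply_word w g = Some d \<and> is_comp d \<and> length d \<le> L \<and> h = emb L d"
proof (induction w arbitrary: h)
  case Nil then show ?case by auto
next
  case (Cons i w)
  then obtain h1 where h1: "process L w (emb L g) = Some h1" "step L i h1 = Some h"
    by (cases "process L w (emb L g)") auto
  obtain d1 where d1: "apply_word w g = Some d1" "is_comp d1" "length d1 \<le> L" "h1 = emb L d1"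
    using Cons.IH[OF Cons.prems(1,2) h1(1)] by blast
  show ?case
  proof (cases "i = 1")
    case True
    have "length d1 \<noteq> L" using step1_full[OF d1(2)] h1 d1 True by auto
    then have "length d1 < L" using d1 by simp
    have t: "t_op 1 d1 = Some (1 # d1)" by (simp add: t_op_def)
    have h: "h = emb L (1 # d1)" using step1_corr[OF d1(2) \<open>length d1 < L\<close>] h1 d1 True by simp
    have c: "is_comp (1 # d1)" using d1(2) by (simp add: is_comp_def)
    show ?thesis
      apply (rule exI[of _ "1 # d1"])
      using t h c d1 True \<open>length d1 < L\<close> by simp
  next
    case False
    have "i \<noteq> 0" using h1 step0 by (metis option.distinct(1))
    then have i2: "2 \<le> i" using False by simp
    have e: "step L i (emb L d1) = Option.bind (t_op i d1) (\<lambda>d. Some (emb L d))" using stepi_corr[OF d1(2) d1(3) i2] .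
    then obtain d where d: "t_op i d1 = Some d" "h = emb L d" using h1 d1 by (cases "t_op i d1") auto
    have "length d = length d1" "is_comp d" using t_op_SomeD[OF d1(2) d(1)] False by auto
    then show ?thesis using d d1 by auto
  qed
qed

lemma emb_inj:
  assumes "is_comp d" "is_comp b" "length d \<le> L" "length b = L" "emb L d = emb L b"
  shows "d = b"
proof -
  have "length d = L"
  proof (rule ccontr)
    assume "length d \<noteq> L"
    then have "0 < L - length d" using assms by simp
    then have "emb L d 0 = 0" using emb_pos[OF assms(1,3)] by simp
    moreover have "emb L b 0 \<noteq> 0" using emb_pos[OF assms(2)] assms \<open>0 < L - length d\<close> by simp
    ultimately show False using assms by simp
  qed
  moreover have "\<forall>k<L. d!k = b!k"
  proof (intro allI impI)
    fix k assume "k < L"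
    have "emb L d k = emb L b k" using assms by simp
    then show "d!k = b!k" using \<open>k < L\<close> \<open>length d = L\<close> assms unfolding emb_def by simp
  qed
  ultimately show ?thesis using assms by (simp add: nth_equalityI)
qed

lemma aw_iff_proc:
  assumes "is_comp a" "is_comp b" "length a \<le> length b"
  shows "apply_word w a = Some b \<longleftrightarrow> process (length b) w (emb (length b) a) = Some (emb (length b) b)"
proof
  assume "apply_word w a = Some b" then show "process (length b) w (emb (length b) a) = Some (emb (length b) b)"
    using aw_to_proc[OF assms(1)] by simp
next
  assume "process (length b) w (emb (length b) a) = Some (emb (length b) b)"
  then obtain d where "apply_word w a = Some d" "is_comp d" "length d \<le> length b" "emb (length b) b = emb (length b) d"
    using proc_to_aw[OF assms(1,3)] by blast
  then show "apply_word w a = Some b" using emb_inj[of d b "length b"] assms by simp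
qed



lemma count_rep[simp]: "count_list (replicate n y) j = (if y = j then n else 0)"
  by (induction n) auto

lemma sorted_concat_rep: "sorted (concat (map (\<lambda>j. replicate (f j) j) [x..<y]))"
proof (induction y)
  case 0 then show ?case by simp
next
  case (Suc y)
  show ?case
  proof (cases "x \<le> y")
    case True
    then have "[x..<Suc y] = [x..<y] @ [y]" by simp
    then show ?thesis using Suc by (auto simp: sorted_append)
  next
    case False then show ?thesis by simp
  qed
qed

lemma count_concat_rep: "count_list (concat (map (\<lambda>j. replicate (f j) j) [1..<y])) j = (if 1 \<le> j \<and> j < y then f j else 0)"
proof (induction y)
  case 0 then show ?case by simp
next
  case (Suc y)
  show ?case
  proof (cases "1 \<le> y")
    case True
    then have "[1..<Suc y] = [1..<y] @ [y]" by simp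
    then show ?thesis using Suc by auto
  next
    case False then show ?thesis by auto
  qed
qed

lemma count_distinct: "distinct xs \<Longrightarrow> x \<in> set xs \<Longrightarrow> count_list xs x = 1"
  by (induction xs) (auto simp: count_list_0_iff)

lemma card_split:
  fixes L j :: nat and p h g :: "nat \<Rightarrow> nat"
  assumes "\<And>r. r < L \<Longrightarrow> p r \<le> h r \<and> h r \<le> g r"
  shows "card {r. r<L \<and> p r < j \<and> j \<le> g r} = card {r. r<L \<and> p r < j \<and> j \<le> h r} + card {r. r<L \<and> h r < j \<and> j \<le> g r}"
proof -
  have "{r. r<L \<and> p r < j \<and> j \<le> g r} = {r. r<L \<and> p r < j \<and> j \<le> h r} \<union> {r. r<L \<and> h r < j \<and> j \<le> g r}"
    using assms by (auto intro: le_trans) (meson le_less_trans not_le)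
  moreover have "{r. r<L \<and> p r < j \<and> j \<le> h r} \<inter> {r. r<L \<and> h r < j \<and> j \<le> g r} = {}" by auto
  ultimately show ?thesis by (simp add: card_Un_disjoint)
qed

locale strip =
  fixes L :: nat and p g :: "nat \<Rightarrow> nat" and a b :: nat
  assumes out: "\<And>r. L \<le> r \<Longrightarrow> p r = 0 \<and> g r = 0"
    and gpos: "\<And>r. r < L \<Longrightarrow> 1 \<le> g r"
    and pg: "\<And>r. p r \<le> g r"
    and prefix: "\<And>r r'. r' \<le> r \<Longrightarrow> r < L \<Longrightarrow> p r = 0 \<Longrightarrow> p r' = 0"
    and frozen: "\<And>u r v. u<L \<Longrightarrow> r<L \<Longrightarrow> 1 \<le> v \<Longrightarrow> p u = v \<Longrightarrow> g u = v \<Longrightarrow> p r \<le> v \<Longrightarrow> v < g r \<Longrightarrow> r < u"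
    and N1: "\<And>r r'. r < L \<Longrightarrow> p r < 1 \<Longrightarrow> 2 \<le> g r \<Longrightarrow> r' < L \<Longrightarrow> p r' < 1 \<Longrightarrow> r' \<le> r"
    and N2: "\<And>j r r'. 2 \<le> j \<Longrightarrow> r < L \<Longrightarrow> p r < j \<Longrightarrow> Suc j \<le> g r \<Longrightarrow> r' < L \<Longrightarrow> p r' < j \<Longrightarrow> j \<le> g r' \<Longrightarrow> r \<le> r'"
    and a1: "1 \<le> a" and ab: "a \<le> b"
    and supp: "\<And>j. (\<exists>r<L. p r < j \<and> j \<le> g r) \<longleftrightarrow> a \<le> j \<and> j \<le> b"
begin

definition R :: "nat \<Rightarrow> nat set" where "R j = {r. r < L \<and> p r < j \<and> j \<le> g r}"
definition cnt :: "nat \<Rightarrow> nat" where "cnt j = card (R j)"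
definition Span :: "nat \<Rightarrow> bool" where "Span j \<longleftrightarrow> (\<exists>r. r \<in> R j \<and> r \<in> R (Suc j))"
definition NEc :: "nat \<Rightarrow> bool" where
  "NEc j \<longleftrightarrow> R j \<noteq> {} \<and> R (Suc j) \<noteq> {} \<and> (\<forall>r1\<in>R (Suc j). \<forall>r2\<in>R j. r1 < r2)"
definition good :: "nat set \<Rightarrow> bool" where
  "good D \<longleftrightarrow> D \<subseteq> {a..<b} \<and> (\<forall>j. Span j \<longrightarrow> j \<in> D) \<and> (\<forall>j\<in>D. Span j \<or> NEc j)"
definition dlist :: "nat set \<Rightarrow> nat list" where "dlist D = filter (\<lambda>d. d \<in> D) (rev [1..<b])"
definition swl :: "nat set \<Rightarrow> nat list" where
  "swl D = concat (map (\<lambda>j. replicate (cnt j - (if j \<in> D then 1 else 0)) j) [1..<Suc b])"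
definition mkword :: "nat set \<Rightarrow> nat list" where "mkword D = swl D @ dlist D"

lemma R_ne: "R j \<noteq> {} \<longleftrightarrow> a \<le> j \<and> j \<le> b"
  using supp[of j] unfolding R_def by auto

lemma cnt_pos: "0 < cnt j \<longleftrightarrow> a \<le> j \<and> j \<le> b"
  unfolding cnt_def using R_ne[of j] by (simp add: card_gt_0_iff R_def)

lemma Span_range: "Span j \<Longrightarrow> a \<le> j \<and> j < b"
proof -
  assume "Span j"
  then have "R j \<noteq> {}" "R (Suc j) \<noteq> {}" unfolding Span_def by auto
  then show ?thesis using R_ne by auto
qed

lemma sorted_swl: "sorted (swl D)"
  unfolding swl_def by (rule sorted_concat_rep)

lemma count_swl: "count_list (swl D) j = (if 1 \<le> j \<and> j \<le> b then cnt j - (if j \<in> D then 1 else 0) else 0)"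
  unfolding swl_def count_concat_rep by (simp add: less_Suc_eq_le)

lemma dlist_desc: "sorted_wrt (>) (dlist D)"
  unfolding dlist_def by (rule sorted_wrt_filter) (simp add: sorted_wrt_rev sorted_upt)

lemma count_dlist: "count_list (dlist D) j = (if j \<in> D \<and> 1 \<le> j \<and> j < b then 1 else 0)"
proof -
  have "distinct (dlist D)" unfolding dlist_def by simp
  moreover have "set (dlist D) = {j. j \<in> D \<and> 1 \<le> j \<and> j < b}" unfolding dlist_def by auto
  ultimately show ?thesis by (auto simp: count_list_0_iff count_distinct) 
qed


definition xr :: "nat \<Rightarrow> nat" where
  "xr j = (if j = 1 then (GREATEST r. r \<in> R 1) else (LEAST r. r \<in> R j))"

lemma R_fin: "finite (R j)" unfolding R_def by simp

lemma xr_R: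
  assumes "R j \<noteq> {}"
  shows "xr j \<in> R j" "j = 1 \<Longrightarrow> r \<in> R 1 \<Longrightarrow> r \<le> xr 1" "j \<noteq> 1 \<Longrightarrow> r \<in> R j \<Longrightarrow> xr j \<le> r"
proof -
  obtain r0 where r0: "r0 \<in> R j" using assms by blast
  have bnd: "\<And>y. y \<in> R k \<Longrightarrow> y \<le> L" for k unfolding R_def by simp
  show "xr j \<in> R j"
  proof (cases "j = 1")
    case True
    then show ?thesis unfolding xr_def using GreatestI_nat[of "\<lambda>r. r \<in> R 1" r0 L] r0 bnd by auto
  next
    case False
    then show ?thesis unfolding xr_def using LeastI[of "\<lambda>r. r \<in> R j" r0] r0 by auto
  qed
  show "j = 1 \<Longrightarrow> r \<in> R 1 \<Longrightarrow> r \<le> xr 1"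
    unfolding xr_def using Greatest_le_nat[of "\<lambda>r. r \<in> R 1" r L] bnd by auto
  show "j \<noteq> 1 \<Longrightarrow> r \<in> R j \<Longrightarrow> xr j \<le> r"
    unfolding xr_def by (auto intro: Least_le)
qed

lemma xr_span:
  assumes "r \<in> R j" "r \<in> R (Suc j)"
  shows "xr j = r"
proof (cases "j = 1")
  case True
  have "\<And>r'. r' \<in> R 1 \<Longrightarrow> r' \<le> r" using N1[of r] assms True unfolding R_def by auto
  moreover have "xr 1 \<in> R 1" "r \<le> xr 1" using xr_R[of 1] assms True by auto
  ultimately show ?thesis using True by (meson antisym)
next
  case False
  have j2: "2 \<le> j" using False assms unfolding R_def by auto
  have "\<And>r'. r' \<in> R j \<Longrightarrow> r \<le> r'" using N2[OF j2, of r] assms unfolding R_def by auto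
  moreover have "xr j \<in> R j" "xr j \<le> r" using xr_R[of j] assms False by auto
  ultimately show ?thesis by (meson antisym)
qed

lemma goodD:
  assumes "good D"
  shows "D \<subseteq> {a..<b}" "\<And>j. Span j \<Longrightarrow> j \<in> D" "\<And>j. j \<in> D \<Longrightarrow> Span j \<or> NEc j"
  using assms unfolding good_def by blast+

lemma xr_below:
  assumes "good D" "i \<in> D" "g (xr i) = i" "r \<in> R (Suc i)"
  shows "r < xr i"
proof -
  have "a \<le> i" "i < b" using goodD(1)[OF assms(1)] assms(2) by auto
  then have "R i \<noteq> {}" using R_ne by simp
  then have q: "xr i \<in> R i" using xr_R by blast
  from goodD(3)[OF assms(1,2)] show ?thesis
  proof
    assume "Span i"
    then obtain \<rho> where "\<rho> \<in> R i" "\<rho> \<in> R (Suc i)" unfolding Span_def by blast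
    then have "xr i = \<rho>" using xr_span by blast
    then show ?thesis using assms(3) \<open>\<rho> \<in> R (Suc i)\<close> unfolding R_def by simp
  next
    assume "NEc i"
    then show ?thesis using q assms(4) unfolding NEc_def by blast
  qed
qed

definition Fj :: "nat set \<Rightarrow> nat \<Rightarrow> nat \<Rightarrow> nat" where
  "Fj D j r = (if r < L then max (p r) (min (g r - 1) (j - 1)) +
      (if g r < j \<and> g r \<in> D \<and> xr (g r) = r \<and> p r < g r then 1 else 0) else 0)"

lemma F1: "Fj D 1 = p"
proof
  fix r show "Fj D 1 r = p r"
  proof (cases "r < L")
    case True then show ?thesis using gpos[OF True] unfolding Fj_def by simp
  next
    case False then show ?thesis using out[of r] unfolding Fj_def by simp
  qed
qed

lemma Fnot:
  assumes "good D" "j \<notin> D"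
  shows "Fj D (Suc j) = Fj D j"
proof
  fix r show "Fj D (Suc j) r = Fj D j r"
  proof (cases "r < L")
    case True
    have ns: "\<not> (Suc j \<le> g r \<and> p r < j)"
    proof
      assume "Suc j \<le> g r \<and> p r < j"
      then have "Span j" unfolding Span_def R_def using True by auto
      then show False using goodD(2)[OF assms(1)] assms(2) by blast
    qed
    have e: "(g r < Suc j \<and> g r \<in> D \<and> xr (g r) = r \<and> p r < g r) = (g r < j \<and> g r \<in> D \<and> xr (g r) = r \<and> p r < g r)"
      using assms(2) by (cases "g r = j") auto
    have m: "max (p r) (min (g r - 1) (Suc j - 1)) = max (p r) (min (g r - 1) (j - 1))"
      using ns by (cases "p r < j"; cases "Suc j \<le> g r") (auto simp: max_def min_def)
    show ?thesis using True e m unfolding Fj_def by presburger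
  next
    case False then show ?thesis unfolding Fj_def by simp
  qed
qed

lemma Fupd:
  assumes "good D" "j \<in> D"
  shows "Fj D (Suc j) = (Fj D j)(xr j := j)"
proof -
  have "a \<le> j" "j < b" using goodD(1)[OF assms(1)] assms(2) by auto
  then have "R j \<noteq> {}" using R_ne by simp
  then have y: "xr j \<in> R j" using xr_R by blast
  show ?thesis
  proof
    fix r show "Fj D (Suc j) r = ((Fj D j)(xr j := j)) r"
    proof (cases "r = xr j")
      case True
      have yL: "r < L" "p r < j" "j \<le> g r" using y True unfolding R_def by auto
      show ?thesis
      proof (cases "Suc j \<le> g r")
        case True
        then show ?thesis using yL \<open>r = xr j\<close> unfolding Fj_def by simp
      next
        case False
        then have "g r = j" using yL by simp
        then show ?thesis using yL \<open>r = xr j\<close> assms(2) unfolding Fj_def by simp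
      qed
    next
      case False
      show ?thesis
      proof (cases "r < L")
        case True
        have ns: "\<not> (Suc j \<le> g r \<and> p r < j)"
        proof
          assume "Suc j \<le> g r \<and> p r < j"
          then have "r \<in> R j" "r \<in> R (Suc j)" unfolding R_def using True by auto
          then show False using xr_span False by metis
        qed
        have e: "(g r < Suc j \<and> g r \<in> D \<and> xr (g r) = r \<and> p r < g r) = (g r < j \<and> g r \<in> D \<and> xr (g r) = r \<and> p r < g r)"
          using False by (cases "g r = j") auto
        have m: "max (p r) (min (g r - 1) (Suc j - 1)) = max (p r) (min (g r - 1) (j - 1))"
          using ns by (cases "p r < j"; cases "Suc j \<le> g r") (auto simp: max_def min_def)
        show ?thesis using True e m False unfolding Fj_def by simp
      next
        case False then show ?thesis using \<open>r \<noteq> xr j\<close> unfolding Fj_def by simp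
      qed
    qed
  qed
qed


lemma Fj_frozen_or_D:
  assumes "r < L" "Fj D j r = g r" "g r < j"
  shows "(p r = g r) \<or> (p r < g r \<and> g r \<in> D \<and> xr (g r) = r)"
proof (cases "p r = g r")
  case True then show ?thesis by simp
next
  case False
  then have lt: "p r < g r" using pg[of r] by simp
  then have "max (p r) (min (g r - 1) (j - 1)) = g r - 1" using assms(3) by (auto simp: max_def min_def)
  then have "Fj D j r = g r - 1 + (if g r < j \<and> g r \<in> D \<and> xr (g r) = r \<and> p r < g r then 1 else 0)"
    using assms(1) unfolding Fj_def by simp
  then have "(g r < j \<and> g r \<in> D \<and> xr (g r) = r \<and> p r < g r)" using assms(2) gpos[OF assms(1)]
    by (cases "g r < j \<and> g r \<in> D \<and> xr (g r) = r \<and> p r < g r") auto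
  then show ?thesis using lt by simp
qed

lemma Fstep:
  assumes "good D" "j \<in> D"
  shows "step L j (Fj D j) = Some (Fj D (Suc j))"
proof -
  have ab': "a \<le> j" "j < b" using goodD(1)[OF assms(1)] assms(2) by auto
  then have "R j \<noteq> {}" using R_ne by simp
  then have y: "xr j \<in> R j" using xr_R by blast
  have j1: "1 \<le> j" using ab' a1 by simp
  show ?thesis
  proof (cases "j = 1")
    case True
    have yz: "xr 1 < L" "p (xr 1) = 0" using y True unfolding R_def by auto
    have G: "\<forall>r<L. p r = 0 \<longrightarrow> r \<le> xr 1"
    proof (intro allI impI)
      fix r assume "r < L" "p r = 0"
      then have "r \<in> R 1" using gpos unfolding R_def by auto
      then show "r \<le> xr 1" using xr_R(2)[of 1 r] \<open>R j \<noteq> {}\<close> True by simp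
    qed
    show ?thesis using step_greatest[OF yz G] Fupd[OF assms] F1 True by simp
  next
    case False
    then have j2: "2 \<le> j" using j1 by simp
    have yL: "xr j < L" "p (xr j) < j" "j \<le> g (xr j)" using y unfolding R_def by auto
    have Fy: "Fj D j (xr j) = j - 1" using yL unfolding Fj_def by (simp add: max_def)
    have G: "\<forall>r<L. Fj D j r = j - 1 \<longrightarrow> xr j \<le> r"
    proof (intro allI impI)
      fix r assume r: "r < L" "Fj D j r = j - 1"
      show "xr j \<le> r"
      proof (cases "j \<le> g r")
        case True
        have "min (g r - 1) (j - 1) = j - 1" using True by simp
        then have "Fj D j r = max (p r) (j - 1)" using r(1) True unfolding Fj_def by simp
        then have "p r < j" using r j2 by simp
        then have "r \<in> R j" using r True unfolding R_def by simp
        then show ?thesis using xr_R(3)[of j r] False \<open>R j \<noteq> {}\<close> by simp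
      next
        case gl: False
        have "Fj D j r \<le> g r"
        proof -
          have "max (p r) (min (g r - 1) (j - 1)) \<le> g r" using pg[of r] by simp
          moreover have "max (p r) (min (g r - 1) (j - 1)) \<le> g r - 1 \<or> p r = g r"
            using pg[of r] by (auto simp: max_def min_def)
          ultimately show ?thesis unfolding Fj_def using r(1) by auto
        qed
        have "g r = j - 1 \<or> Fj D j r < g r" using \<open>Fj D j r \<le> g r\<close> r gl by linarith
        show ?thesis
        proof (cases "g r = j - 1")
          case True
          then have "Fj D j r = g r" using r by simp
          have "g r < j" using gl by simp
          from Fj_frozen_or_D[OF r(1) \<open>Fj D j r = g r\<close> this]
          show ?thesis
          proof (elim disjE)
            assume "p r = g r"
            then have "xr j < r" using frozen[of r "xr j" "j - 1"] r yL True j2 by simp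
            then show ?thesis by simp
          next
            assume a: "p r < g r \<and> g r \<in> D \<and> xr (g r) = r"
            have "Suc (j - 1) = j" using j2 by simp
            then have "xr j \<in> R (Suc (j - 1))" using y by simp
            then have "xr j < xr (j - 1)" using xr_below[OF assms(1), of "j - 1" "xr j"] a True by simp
            then show ?thesis using a True by simp
          qed
        next
          case False
          then have "Fj D j r < g r" using \<open>g r = j - 1 \<or> Fj D j r < g r\<close> by simp
          then show ?thesis using r gl by simp
        qed
      qed
    qed
    show ?thesis using step_least[OF j2 yL(1) Fy G] Fupd[OF assms] by simp
  qed
qed

lemma dphase:
  assumes "good D"
  shows "1 \<le> j \<Longrightarrow> j \<le> b \<Longrightarrow> process L (filter (\<lambda>d. d \<in> D) (rev [1..<j])) p = Some (Fj D j)"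
proof (induction j)
  case 0 then show ?case by simp
next
  case (Suc j)
  show ?case
  proof (cases "j = 0")
    case True then show ?thesis using F1 by simp
  next
    case False
    then have IH: "process L (filter (\<lambda>d. d \<in> D) (rev [1..<j])) p = Some (Fj D j)" using Suc by simp
    have e: "rev [1..<Suc j] = j # rev [1..<j]" using False by simp
    show ?thesis
    proof (cases "j \<in> D")
      case True
      then show ?thesis using e IH Fstep[OF assms True] by simp
    next
      case nd: False
      then show ?thesis using e IH Fnot[OF assms nd] by simp
    qed
  qed
qed


lemma good_works:
  assumes "good D"
  shows "process L (mkword D) p = Some g"
proof -
  define hD where "hD = Fj D b"
  have b1: "1 \<le> b" using a1 ab by simp
  have dp: "process L (dlist D) p = Some hD" unfolding dlist_def hD_def using dphase[OF assms b1] by simp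
  have pm: "\<And>r. p r \<le> hD r" using process_mono[OF dp] by blast
  have Dsub: "D \<subseteq> {a..<b}" using goodD(1)[OF assms] .
  have A0: "\<forall>r. L \<le> r \<longrightarrow> hD r = g r" using out unfolding hD_def Fj_def by simp
  have A1': "\<And>r. r < L \<Longrightarrow> hD r \<le> g r \<and> g r \<le> Suc (hD r)"
  proof -
    fix r assume r: "r < L"
    show "hD r \<le> g r \<and> g r \<le> Suc (hD r)"
    proof (cases "p r = g r")
      case True
      have "min (g r - 1) (b - 1) < g r" using gpos[OF r] by linarith
      then have "max (p r) (min (g r - 1) (b - 1)) = p r" using True by simp
      then have "hD r = p r" unfolding hD_def Fj_def using r True by simp
      then show ?thesis using True by simp
    next
      case False
      then have lt: "p r < g r" using pg[of r] by simp
      then have "r \<in> R (g r)" using r unfolding R_def by simp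
      then have "g r \<le> b" using R_ne by blast
      then have "max (p r) (min (g r - 1) (b - 1)) = g r - 1" using lt by (auto simp: max_def min_def)
      then have "hD r = g r - 1 + (if g r < b \<and> g r \<in> D \<and> xr (g r) = r \<and> p r < g r then 1 else 0)"
        unfolding hD_def Fj_def using r by simp
      then show ?thesis using gpos[OF r] by auto
    qed
  qed
  have A2: "\<forall>j. count_list (swl D) j = card {r. r<L \<and> hD r < j \<and> j \<le> g r}"
  proof
    fix j
    have cs: "cnt j = count_list (dlist D) j + card {r. r<L \<and> hD r < j \<and> j \<le> g r}"
      unfolding cnt_def R_def using card_split[of L p hD g j] pm A1' process_count[OF dp, of j] by simp
    show "count_list (swl D) j = card {r. r<L \<and> hD r < j \<and> j \<le> g r}"
    proof (cases "a \<le> j \<and> j \<le> b")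
      case True
      then show ?thesis using cs count_swl[of D j] count_dlist[of D j] a1 Dsub by auto
    next
      case False
      then have "\<not> 0 < cnt j" using cnt_pos[of j] by blast
      then have "cnt j = 0" by simp
      then show ?thesis using cs count_swl[of D j] count_dlist[of D j] a1 Dsub False by auto
    qed
  qed
  have A3: "\<forall>j r q. 2 \<le> j \<longrightarrow> r<L \<longrightarrow> q<L \<longrightarrow> hD r = j-1 \<longrightarrow> hD q = j-1 \<longrightarrow> g r = j \<longrightarrow> g q = j-1 \<longrightarrow> r < q"
  proof (intro allI impI)
    fix j r q assume a: "2 \<le> j" "r < L" "q < L" "hD r = j - 1" "hD q = j - 1" "g r = j" "g q = j - 1"
    have "g q < b"
    proof -
      have "r \<in> R j" using a pm[of r] unfolding R_def by simp
      then have "j \<le> b" using R_ne by blast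
      then show ?thesis using a by simp
    qed
    have "Fj D b q = g q" using a hD_def by simp
    from Fj_frozen_or_D[OF a(3) this \<open>g q < b\<close>] show "r < q"
    proof (elim disjE)
      assume "p q = g q"
      then show ?thesis using frozen[of q r "j - 1"] a pm[of r] by simp
    next
      assume q: "p q < g q \<and> g q \<in> D \<and> xr (g q) = q"
      have "Suc (j - 1) = j" using a by simp
      then have "r \<in> R (Suc (j - 1))" using a pm[of r] unfolding R_def by simp
      then show ?thesis using xr_below[OF assms, of "j - 1" r] q a by simp
    qed
  qed
  have "SWC L hD g (swl D)" unfolding SWC_def using A0 A1' A2 A3 by blast
  then have "process L (swl D) hD = Some g" using sweep_bwd[OF sorted_swl] gpos by blast
  then show ?thesis unfolding mkword_def using dp by (simp add: process_append)
qed


lemma set_dlist: "set (dlist D) = {j. j \<in> D \<and> 1 \<le> j \<and> j < b}"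
  unfolding dlist_def by auto

lemma works_good:
  assumes Dsub: "D \<subseteq> {a..<b}" and w: "process L (mkword D) p = Some g"
  shows "good D"
proof -
  obtain hD where dp: "process L (dlist D) p = Some hD" and sp: "process L (swl D) hD = Some g"
    using w unfolding mkword_def by (cases "process L (dlist D) p") (auto simp: process_append)
  note S = SWC_D[OF sweep_fwd[OF sorted_swl sp]]
  have pm: "\<And>r. p r \<le> hD r" using process_mono[OF dp] by blast
  have spanD: "\<And>j. Span j \<Longrightarrow> j \<in> D"
  proof -
    fix j assume "Span j"
    then obtain r where r: "r \<in> R j" "r \<in> R (Suc j)" unfolding Span_def by blast
    then have "r < L" "p r < j" "Suc j \<le> g r" unfolding R_def by auto
    then have "j \<le> hD r" using S(3)[of r] by simp
    then have "j \<in> set (dlist D)" using process_pass[OF dp \<open>p r < j\<close>] by blast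
    then show "j \<in> D" using set_dlist by blast
  qed
  have sn: "\<And>j. j \<in> D \<Longrightarrow> Span j \<or> NEc j"
  proof (rule ccontr)
    fix j assume jD: "j \<in> D" and nn: "\<not> (Span j \<or> NEc j)"
    have jr: "a \<le> j" "j < b" using Dsub jD by auto
    then have j1: "1 \<le> j" using a1 by simp
    have ne: "R j \<noteq> {}" "R (Suc j) \<noteq> {}" using R_ne jr by auto
    then obtain r1 r2 where r12: "r1 \<in> R (Suc j)" "r2 \<in> R j" "\<not> r1 < r2" using nn unfolding NEc_def by blast
    have "r1 \<noteq> r2" using nn r12 unfolding Span_def by blast
    then have r21: "r2 < r1" using r12 by simp
    have c1: "card {r. r < L \<and> p r < j \<and> j \<le> hD r} = 1"
      using process_count[OF dp, of j] count_dlist[of D j] jD jr j1 by simp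
    then obtain x where x: "x < L" "p x < j" "j \<le> hD x"
      using card_pos_ex[of L "\<lambda>r. p r < j \<and> j \<le> hD r"] by auto
    have xs: "x \<in> {r. r < L \<and> p r < j \<and> j \<le> hD r}" using x by simp
    have gx: "g x = j"
    proof (rule ccontr)
      assume "g x \<noteq> j"
      then have "Suc j \<le> g x" using x S(2)[of x] by simp
      then have "x \<in> R j" "x \<in> R (Suc j)" using x S(2)[of x] unfolding R_def by auto
      then show False using nn unfolding Span_def by blast
    qed
    have hx: "hD x = j" using x gx S(2)[of x] by simp
    have r1L: "r1 < L" "p r1 \<le> j" "Suc j \<le> g r1" using r12 unfolding R_def by auto
    have "j \<le> hD r1" using S(3)[of r1] r1L by simp
    have r1x: "r1 < x"
    proof (cases "hD r1 = j")
      case True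
      then have "g r1 = Suc j" using S(3)[of r1] r1L by simp
      then show ?thesis using S(5)[of "Suc j" r1 x] r1L x hx gx True j1 by simp
    next
      case False
      then have "Suc j \<le> hD r1" using \<open>j \<le> hD r1\<close> by simp
      have "Suc j \<in> set (dlist D)" using process_pass[OF dp, of r1 "Suc j"] r1L \<open>Suc j \<le> hD r1\<close> by simp
      moreover have "x \<noteq> r1" using gx r1L by auto
      ultimately show ?thesis
        using process_ord[OF dlist_desc dp, of "Suc j" r1 x] j1 r1L \<open>Suc j \<le> hD r1\<close> x hx by simp
    qed
    show False
    proof (cases "j = 1")
      case True
      then have "p x = 0" using x by simp
      then have "p r1 = 0" using prefix[of r1 x] r1x x by simp
      then have "r1 \<in> R 1" "r1 \<in> R 2" using r1L gpos[of r1] True unfolding R_def by auto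
      then show False using nn True unfolding Span_def by (simp add: numeral_2_eq_2)
    next
      case False
      then have j2: "2 \<le> j" using j1 by simp
      have r2L: "r2 < L" "p r2 < j" "j \<le> g r2" using r12 unfolding R_def by auto
      have "r2 \<noteq> x" using r21 r1x by simp
      have h2: "hD r2 = j - 1"
      proof (rule ccontr)
        assume "hD r2 \<noteq> j - 1"
        then have "j \<le> hD r2" using S(3)[of r2] r2L by simp
        then have "r2 \<in> {r. r < L \<and> p r < j \<and> j \<le> hD r}" using r2L by simp
        then show False using card1_eq[OF c1 _ xs] \<open>r2 \<noteq> x\<close> by blast
      qed
      have "j \<in> set (dlist D)" using set_dlist jD jr j1 by simp
      then have "x < r2" using process_ord[OF dlist_desc dp, of j x r2] j2 x r2L \<open>r2 \<noteq> x\<close> h2 by simp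
      then show False using r21 r1x by simp
    qed
  qed
  show ?thesis unfolding good_def using Dsub spanD sn by blast
qed

end



lemma rhw_intro:
  assumes "sorted u" "u \<noteq> []" "sorted_wrt (>) v" "\<forall>x\<in>set v. x < last u"
  shows "reverse_hookword (u @ v)"
  unfolding reverse_hookword_def
proof (intro exI[of _ "length u - 1"] conjI allI impI)
  show "length u - 1 < length (u @ v)" using assms(2) by (cases u) auto
next
  fix q assume q: "q < length u - 1"
  then have "Suc q < length u" by simp
  then show "(u @ v) ! q \<le> (u @ v) ! (q + 1)"
    using sorted_nth_mono[OF assms(1), of q "q+1"] by (simp add: nth_append)
next
  fix q assume q: "length u - 1 \<le> q \<and> q + 1 < length (u @ v)"
  show "(u @ v) ! (q + 1) < (u @ v) ! q"
  proof (cases "q = length u - 1")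
    case True
    then have e1: "(u @ v) ! q = last u" using assms(2) by (simp add: nth_append last_conv_nth)
    have "(u @ v) ! (q + 1) = v ! 0" using True assms(2) by (simp add: nth_append)
    moreover have "v \<noteq> []" using q True assms(2) by auto
    ultimately show ?thesis using e1 assms(4) by simp
  next
    case False
    moreover have "0 < length u" using assms(2) by simp
    ultimately have "length u \<le> q" using q by linarith
    then have "(u @ v) ! q = v ! (q - length u)" "(u @ v) ! (q + 1) = v ! (q + 1 - length u)"
      by (simp_all add: nth_append)
    moreover have "v ! (q - length u) > v ! (q + 1 - length u)"
    proof -
      have "q - length u < q + 1 - length u" "q + 1 - length u < length v" using q \<open>length u \<le> q\<close> by auto
      then show ?thesis using sorted_wrt_nth_less[OF assms(3), of "q - length u" "q + 1 - length u"] by blast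
    qed
    ultimately show ?thesis by simp
  qed
qed

lemma rhw_split:
  assumes "reverse_hookword w"
  shows "\<exists>u v. w = u @ v \<and> sorted u \<and> u \<noteq> [] \<and> sorted_wrt (>) v \<and> (\<forall>x\<in>set v. x < last u)"
proof -
  obtain k where k: "k < length w" "\<forall>q. q < k \<longrightarrow> w!q \<le> w!(q+1)"
    "\<forall>q. k \<le> q \<and> q + 1 < length w \<longrightarrow> w!q > w!(q+1)"
    using assms unfolding reverse_hookword_def by blast
  define u where "u = take (Suc k) w"
  define v where "v = drop (Suc k) w"
  have lu: "length u = Suc k" using k(1) unfolding u_def by simp
  have su: "sorted u" unfolding sorted_iff_nth_Suc
  proof (intro allI impI)
    fix i assume "Suc i < length u"
    then show "u ! i \<le> u ! Suc i" using k(2) lu unfolding u_def by simp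
  qed
  have sv: "sorted_wrt (>) v" unfolding sorted_wrt_iff_nth_Suc_transp[of "(>)", OF transp_on_greater]
  proof (intro allI impI)
    fix i assume "Suc i < length v"
    then show "v ! i > v ! Suc i" using k(3)[rule_format, of "Suc k + i"] unfolding v_def by simp
  qed
  have lst: "last u = w ! k"
  proof -
    have "u \<noteq> []" using lu by auto
    then have "last u = u ! (length u - 1)" by (simp add: last_conv_nth)
    also have "\<dots> = w ! k" using lu unfolding u_def by simp
    finally show ?thesis .
  qed
  have lt: "\<forall>x\<in>set v. x < last u"
  proof
    fix x assume "x \<in> set v"
    then obtain i where i: "i < length v" "v ! i = x" by (metis in_set_conv_nth)
    have "v ! 0 < w ! k" using k(3)[rule_format, of k] i unfolding v_def by simp
    moreover have "v ! i \<le> v ! 0"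
    proof (cases "i = 0")
      case False then show ?thesis using sorted_wrt_nth_less[OF sv, of 0 i] i by simp
    qed simp
    ultimately show "x < last u" using i lst by simp
  qed
  have "w = u @ v" unfolding u_def v_def by simp
  then show ?thesis using su sv lt lu by (intro exI[of _ u] exI[of _ v]) auto
qed

context strip
begin

lemma cnt0: "\<not> (a \<le> j \<and> j \<le> b) \<Longrightarrow> cnt j = 0"
  using cnt_pos[of j] by auto

lemma count_mkword: "D \<subseteq> {a..<b} \<Longrightarrow> count_list (mkword D) j = cnt j"
proof -
  assume D: "D \<subseteq> {a..<b}"
  show ?thesis
  proof (cases "a \<le> j \<and> j \<le> b")
    case True
    then have "0 < cnt j" using cnt_pos by simp
    then show ?thesis unfolding mkword_def using count_swl[of D j] count_dlist[of D j] True a1 D by auto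
  next
    case False
    then show ?thesis unfolding mkword_def using count_swl[of D j] count_dlist[of D j] cnt0[OF False] D by auto
  qed
qed

lemma set_mkword: "D \<subseteq> {a..<b} \<Longrightarrow> set (mkword D) = {a..b}"
proof -
  assume D: "D \<subseteq> {a..<b}"
  have "\<And>j. j \<in> set (mkword D) \<longleftrightarrow> 0 < cnt j"
    using count_mkword[OF D] count_list_0_iff by (metis neq0_conv)
  then show ?thesis using cnt_pos by auto
qed

lemma b_swl: "D \<subseteq> {a..<b} \<Longrightarrow> b \<in> set (swl D) \<and> last (swl D) = b"
proof -
  assume D: "D \<subseteq> {a..<b}"
  have "0 < cnt b" using cnt_pos ab by simp
  then have "0 < count_list (swl D) b" using count_swl[of D b] D a1 ab by auto
  then have bin: "b \<in> set (swl D)" by (rule count_pos_in)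
  then have ne: "swl D \<noteq> []" by auto
  have le: "\<forall>x\<in>set (swl D). x \<le> b"
  proof
    fix x assume "x \<in> set (swl D)"
    then have "0 < count_list (swl D) x" by (metis count_list_0_iff neq0_conv)
    then show "x \<le> b" using count_swl[of D x] by (auto split: if_splits)
  qed
  have "last (swl D) \<in> set (swl D)" using ne by simp
  then have "last (swl D) \<le> b" using le by blast
  moreover have "b \<le> last (swl D)"
  proof -
    obtain i where i: "i < length (swl D)" "swl D ! i = b" using bin by (metis in_set_conv_nth)
    then have "swl D ! i \<le> swl D ! (length (swl D) - 1)" using sorted_nth_mono[OF sorted_swl[of D], of i "length (swl D) - 1"] by simp
    then show ?thesis using i ne by (simp add: last_conv_nth)
  qed
  ultimately show ?thesis using bin by simp
qed

lemma rhw_mkword: "D \<subseteq> {a..<b} \<Longrightarrow> reverse_hookword (mkword D)"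
proof -
  assume D: "D \<subseteq> {a..<b}"
  have "\<forall>x\<in>set (dlist D). x < last (swl D)" using b_swl[OF D] set_dlist by auto
  moreover have "swl D \<noteq> []" using b_swl[OF D] by auto
  ultimately show ?thesis unfolding mkword_def using rhw_intro[OF sorted_swl[of D] _ dlist_desc[of D]] by blast
qed

lemma mkword_inv:
  assumes D: "D \<subseteq> {a..<b}"
  shows "set (drop (length (mkword D) - length (takeWhile (\<lambda>x. x \<noteq> b) (rev (mkword D)))) (mkword D)) = D"
proof -
  have bv: "\<forall>x\<in>set (rev (dlist D)). x \<noteq> b" using set_dlist by auto
  have ne: "swl D \<noteq> []" using b_swl[OF D] by auto
  have "rev (swl D) = rev (butlast (swl D) @ [last (swl D)])" using append_butlast_last_id[OF ne] by simp
  then have u': "rev (swl D) = b # rev (butlast (swl D))" using b_swl[OF D] by simp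
  have "takeWhile (\<lambda>x. x \<noteq> b) (rev (mkword D)) = rev (dlist D)"
  proof -
    have r: "rev (mkword D) = rev (dlist D) @ rev (swl D)" unfolding mkword_def by simp
    have t: "takeWhile (\<lambda>x. x \<noteq> b) (rev (dlist D) @ rev (swl D)) = rev (dlist D) @ takeWhile (\<lambda>x. x \<noteq> b) (rev (swl D))"
      by (rule takeWhile_append2) (use bv in blast)
    have e: "takeWhile (\<lambda>x. x \<noteq> b) (rev (swl D)) = []" unfolding u' by simp
    show ?thesis unfolding r t e by simp
  qed
  then have "drop (length (mkword D) - length (takeWhile (\<lambda>x. x \<noteq> b) (rev (mkword D)))) (mkword D) = dlist D"
    unfolding mkword_def by simp
  then show ?thesis using set_dlist D a1 by auto
qed

lemma mkword_inj: "inj_on mkword {D. D \<subseteq> {a..<b}}"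
proof (rule inj_onI)
  fix D1 D2 assume "D1 \<in> {D. D \<subseteq> {a..<b}}" "D2 \<in> {D. D \<subseteq> {a..<b}}" "mkword D1 = mkword D2"
  then have h: "D1 \<subseteq> {a..<b}" "D2 \<subseteq> {a..<b}" "mkword D1 = mkword D2" by auto
  define f where "f w = set (drop (length w - length (takeWhile (\<lambda>x. x \<noteq> b) (rev w))) w)" for w
  have "f (mkword D1) = D1" "f (mkword D2) = D2" using mkword_inv[OF h(1)] mkword_inv[OF h(2)] unfolding f_def by auto
  then show "D1 = D2" using h(3) by metis
qed

lemma word_is_mkword:
  assumes cw: "\<And>j. count_list w j = cnt j" and rh: "reverse_hookword w"
  shows "\<exists>D. D \<subseteq> {a..<b} \<and> w = mkword D"
proof -
  obtain u v where uv: "w = u @ v" "sorted u" "u \<noteq> []" "sorted_wrt (>) v" "\<forall>x\<in>set v. x < last u"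
    using rhw_split[OF rh] by blast
  have inw: "\<And>x. x \<in> set w \<Longrightarrow> a \<le> x \<and> x \<le> b"
  proof -
    fix x assume "x \<in> set w"
    then have "0 < count_list w x" by (metis count_list_0_iff neq0_conv)
    then show "a \<le> x \<and> x \<le> b" using cw cnt_pos by simp
  qed
  define D where "D = set v"
  have "last u \<in> set w" using uv by simp
  then have "last u \<le> b" using inw by blast
  then have Dsub: "D \<subseteq> {a..<b}" unfolding D_def using uv inw by fastforce
  have "sorted_wrt (<) (rev v)" using uv(4) by (simp add: sorted_wrt_rev)
  then have dv: "distinct v" by (simp add: strict_sorted_iff)
  have vd: "v = dlist D"
  proof -
    have "sorted_wrt (<) (rev v)" using uv(4) by (simp add: sorted_wrt_rev)
    moreover have "sorted_wrt (<) (rev (dlist D))" using dlist_desc by (simp add: sorted_wrt_rev)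
    moreover have "set (rev v) = set (rev (dlist D))" using set_dlist Dsub a1 unfolding D_def by auto
    ultimately have "rev v = rev (dlist D)"
      using sorted_distinct_set_unique[of "rev v" "rev (dlist D)"] by (simp add: strict_sorted_iff)
    then show ?thesis by simp
  qed
  have cu: "\<And>j. count_list u j = count_list (swl D) j"
  proof -
    fix j
    have cv: "count_list v j = (if j \<in> D then 1 else 0)" using dv count_distinct D_def by auto
    have "count_list u j = cnt j - (if j \<in> D then 1 else 0)" using cw[of j] uv(1) cv by simp
    then show "count_list u j = count_list (swl D) j"
      using count_swl[of D j] cnt0[of j] Dsub a1 by (auto split: if_splits)
  qed
  have "mset u = mset (swl D)" by (simp add: multiset_eq_iff count_mset cu)
  then have "sort u = swl D" using properties_for_sort[of "swl D" u] sorted_swl by simp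
  then have "u = swl D" using sorted_sort_id[OF uv(2)] by simp
  then show ?thesis using uv(1) vd Dsub unfolding mkword_def by blast
qed

end



context strip
begin

lemma NEc_range: "NEc j \<Longrightarrow> a \<le> j \<and> j < b"
  using R_ne[of j] R_ne[of "Suc j"] unfolding NEc_def by auto

lemma NEc_not_Span: "NEc j \<Longrightarrow> \<not> Span j"
  unfolding NEc_def Span_def by blast

lemma card_good: "card {D. good D} = 2 ^ card {j. NEc j}"
proof -
  define SS where "SS = {j. Span j}"
  define NN where "NN = {j. NEc j}"
  have "NN \<subseteq> {a..<b}" unfolding NN_def using NEc_range by auto
  then have finN: "finite NN" using finite_subset by blast
  have disj: "SS \<inter> NN = {}" unfolding SS_def NN_def using NEc_not_Span by auto
  have eq: "{D. good D} = (\<lambda>E. SS \<union> E) ` Pow NN"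
  proof (intro set_eqI iffI)
    fix D assume "D \<in> {D. good D}"
    then have g: "good D" by simp
    have "D = SS \<union> (D - SS)" using goodD(2)[OF g] unfolding SS_def by auto
    moreover have "D - SS \<subseteq> NN" using goodD(3)[OF g] unfolding SS_def NN_def by auto
    ultimately show "D \<in> (\<lambda>E. SS \<union> E) ` Pow NN" by blast
  next
    fix D assume "D \<in> (\<lambda>E. SS \<union> E) ` Pow NN"
    then obtain E where E: "E \<subseteq> NN" "D = SS \<union> E" by blast
    have "D \<subseteq> {a..<b}" using E Span_range NEc_range unfolding SS_def NN_def by auto
    moreover have "\<forall>j. Span j \<longrightarrow> j \<in> D" using E unfolding SS_def by auto
    moreover have "\<forall>j\<in>D. Span j \<or> NEc j" using E unfolding SS_def NN_def by auto
    ultimately show "D \<in> {D. good D}" unfolding good_def by simp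
  qed
  have inj: "inj_on (\<lambda>E. SS \<union> E) (Pow NN)"
  proof (rule inj_onI)
    fix E1 E2 assume "E1 \<in> Pow NN" "E2 \<in> Pow NN" "SS \<union> E1 = SS \<union> E2"
    then show "E1 = E2" using disj by blast
  qed
  have "card {D. good D} = card (Pow NN)" unfolding eq using card_image[OF inj] .
  also have "\<dots> = 2 ^ card NN" using card_Pow[OF finN] by simp
  finally show ?thesis unfolding NN_def .
qed

lemma main_locale:
  "card {w \<in> CRHW (sum cnt {a..b}). process L w p = Some g} = 2 ^ card {j. NEc j}"
proof -
  have eq: "{w \<in> CRHW (sum cnt {a..b}). process L w p = Some g} = mkword ` {D. good D}"
  proof (intro set_eqI iffI)
    fix w assume "w \<in> {w \<in> CRHW (sum cnt {a..b}). process L w p = Some g}"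
    then have w: "w \<in> CRHW (sum cnt {a..b})" "process L w p = Some g" by auto
    have cw: "\<And>j. count_list w j = cnt j" using process_count[OF w(2)] unfolding cnt_def R_def by simp
    have "reverse_hookword w" using w(1) unfolding CRHW_def by simp
    then obtain D where D: "D \<subseteq> {a..<b}" "w = mkword D" using word_is_mkword[OF cw] by blast
    then have "good D" using works_good w(2) by simp
    then show "w \<in> mkword ` {D. good D}" using D by blast
  next
    fix w assume "w \<in> mkword ` {D. good D}"
    then obtain D where D: "good D" "w = mkword D" by blast
    have Ds: "D \<subseteq> {a..<b}" using goodD(1)[OF D(1)] .
    have len: "length w = sum cnt {a..b}"
    proof -
      have "sum (count_list w) {a..b} = length w" using sum_count_set[of w "{a..b}"] set_mkword[OF Ds] D by simp
      moreover have "sum (count_list w) {a..b} = sum cnt {a..b}" using count_mkword[OF Ds] D by simp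
      ultimately show ?thesis by simp
    qed
    have "w \<in> CRHW (sum cnt {a..b})" unfolding CRHW_def connected_word_def
      using len set_mkword[OF Ds] rhw_mkword[OF Ds] D a1 by auto
    then show "w \<in> {w \<in> CRHW (sum cnt {a..b}). process L w p = Some g}" using good_works[OF D(1)] D by simp
  qed
  have "inj_on mkword {D. good D}" using mkword_inj by (rule inj_on_subset) (use goodD in auto)
  then have "card (mkword ` {D. good D}) = card {D. good D}" by (rule card_image)
  then show ?thesis using eq card_good by simp
qed

end



lemma aw_comp: "is_comp g \<Longrightarrow> apply_word w g = Some d \<Longrightarrow> is_comp d \<and> length g \<le> length d"
proof (induction w arbitrary: d)
  case Nil then show ?case by simp
next
  case (Cons i w)
  then obtain d1 where d1: "apply_word w g = Some d1" "t_op i d1 = Some d"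
    by (cases "apply_word w g") auto
  then show ?case using Cons.IH[OF Cons.prems(1) d1(1)] t_op_SomeD[of d1 i d] by auto
qed

lemma ccover_top:
  assumes "ccover g d" "is_comp g"
  shows "\<exists>i. t_op i g = Some d"
proof -
  from assms(1) consider "d = 1 # g" | k where "k < length g" "d = g[k := g!k + 1]" "\<forall>i<k. g!i \<noteq> g!k"
    unfolding ccover_def by blast
  then show ?thesis
  proof cases
    case 1 then show ?thesis by (intro exI[of _ 1]) (simp add: t_op_def)
  next
    case 2
    have pos: "0 < g!k" using assms(2) 2(1) unfolding is_comp_def by (simp add: nth_mem)
    have inset: "g!k \<in> set g" using 2(1) by (simp add: nth_mem)
    have L: "(LEAST k'. k' < length g \<and> g!k' = g!k) = k"
    proof (rule Least_equality)
      show "k < length g \<and> g!k = g!k" using 2(1) by simp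
    next
      fix y assume "y < length g \<and> g!y = g!k"
      then show "k \<le> y" using 2(3) by (meson not_le)
    qed
    have "t_op (g!k + 1) g = Some (g[k := g!k + 1])"
      using pos inset L by (simp add: t_op_def Let_def)
    then show ?thesis using 2(2) by blast
  qed
qed

lemma cless_word: "cless a b \<Longrightarrow> is_comp a \<Longrightarrow> \<exists>w. w \<noteq> [] \<and> apply_word w a = Some b"
  unfolding cless_def
proof (induction rule: tranclp_induct)
  case (base y)
  then obtain i where "t_op i a = Some y" using ccover_top by blast
  then show ?case by (intro exI[of _ "[i]"]) simp
next
  case (step y z)
  then obtain w where w: "w \<noteq> []" "apply_word w a = Some y" by blast
  then have "is_comp y" using aw_comp step.prems by blast
  then obtain i where "t_op i y = Some z" using ccover_top step.hyps(2) by blast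
  then show ?case using w by (intro exI[of _ "i # w"]) simp
qed

lemma skew_mem:
  assumes "length a \<le> length b"
  shows "(i, j) \<in> skew b a \<longleftrightarrow> 1 \<le> i \<and> i - 1 < length b \<and> emb (length b) a (i - 1) < j \<and> j \<le> emb (length b) b (i - 1)"
proof -
  define L where "L = length b"
  define m where "m = L - length a"
  have rem: "(i, j) \<in> {(L - length a + i', j') | i' j'. 1 \<le> i' \<and> i' \<le> length a \<and> 1 \<le> j' \<and> j' \<le> a!(i'-1)}
     \<longleftrightarrow> m < i \<and> i \<le> L \<and> 1 \<le> j \<and> j \<le> a!(i - 1 - m)"
  proof
    assume "(i, j) \<in> {(L - length a + i', j') | i' j'. 1 \<le> i' \<and> i' \<le> length a \<and> 1 \<le> j' \<and> j' \<le> a!(i'-1)}"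
    then obtain i' where "i = m + i'" "1 \<le> i'" "i' \<le> length a" "1 \<le> j" "j \<le> a!(i'-1)" unfolding m_def by blast
    then show "m < i \<and> i \<le> L \<and> 1 \<le> j \<and> j \<le> a!(i - 1 - m)" using assms unfolding m_def L_def by auto
  next
    assume h: "m < i \<and> i \<le> L \<and> 1 \<le> j \<and> j \<le> a!(i - 1 - m)"
    then have "i = L - length a + (i - m) \<and> 1 \<le> i - m \<and> i - m \<le> length a \<and> 1 \<le> j \<and> j \<le> a!((i - m) - 1)"
      using assms unfolding m_def L_def by auto
    then show "(i, j) \<in> {(L - length a + i', j') | i' j'. 1 \<le> i' \<and> i' \<le> length a \<and> 1 \<le> j' \<and> j' \<le> a!(i'-1)}" by blast
  qed
  have "(i, j) \<in> skew b a \<longleftrightarrow> (1 \<le> i \<and> i \<le> L \<and> 1 \<le> j \<and> j \<le> b!(i-1)) \<and> \<not> (m < i \<and> i \<le> L \<and> 1 \<le> j \<and> j \<le> a!(i - 1 - m))"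
    unfolding skew_def diagram_def using rem unfolding L_def by blast
  also have "\<dots> \<longleftrightarrow> 1 \<le> i \<and> i - 1 < L \<and> emb L a (i - 1) < j \<and> j \<le> emb L b (i - 1)"
    unfolding emb_def m_def using assms unfolding L_def by (auto simp: not_le)
  finally show ?thesis unfolding L_def .
qed



theorem mainTheorem17:
  fixes \<alpha> \<beta> :: "nat list" and n :: nat
  assumes "is_comp \<alpha>" and "is_comp \<beta>"
    and "cless \<alpha> \<beta>"
    and "nc_border_strip (skew \<beta> \<alpha>)"
    and "card (skew \<beta> \<alpha>) = n"
  shows "card {w \<in> CRHW n. apply_word w \<alpha> = Some \<beta>} = 2 ^ card (NE (skew \<beta> \<alpha>))"
proof -
  define L where "L = length \<beta>"
  define p where "p = emb L \<alpha>"
  define g where "g = emb L \<beta>"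
  define S where "S = skew \<beta> \<alpha>"
  obtain w0 where w0: "w0 \<noteq> []" "apply_word w0 \<alpha> = Some \<beta>" using cless_word[OF assms(3,1)] by blast
  have lab: "length \<alpha> \<le> L" using aw_comp[OF assms(1) w0(2)] unfolding L_def by simp
  have iff: "\<And>w. apply_word w \<alpha> = Some \<beta> \<longleftrightarrow> process L w p = Some g"
    using aw_iff_proc[OF assms(1,2)] lab unfolding L_def p_def g_def by simp
  have pw0: "process L w0 p = Some g" using iff w0 by blast
  have Smem: "\<And>i j. (i, j) \<in> S \<longleftrightarrow> 1 \<le> i \<and> i - 1 < L \<and> p (i - 1) < j \<and> j \<le> g (i - 1)"
    unfolding S_def p_def g_def L_def using skew_mem lab unfolding L_def by blast
  have Smem': "\<And>r j. (Suc r, j) \<in> S \<longleftrightarrow> r < L \<and> p r < j \<and> j \<le> g r" using Smem by simp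
  have out: "\<And>r. L \<le> r \<Longrightarrow> p r = 0 \<and> g r = 0" unfolding p_def g_def emb_def by simp
  have gpos: "\<And>r. r < L \<Longrightarrow> 1 \<le> g r"
  proof -
    fix r assume r: "r < L"
    have "g r \<noteq> 0" using emb_pos[OF assms(2), of L r] r unfolding g_def L_def by simp
    then show "1 \<le> g r" by simp
  qed
  have pg: "\<And>r. p r \<le> g r" using process_mono[OF pw0] by blast
  have prefix: "\<And>r r'. r' \<le> r \<Longrightarrow> r < L \<Longrightarrow> p r = 0 \<Longrightarrow> p r' = 0"
  proof -
    fix r r' assume h: "r' \<le> r" "r < L" "p r = 0"
    then have "r < L - length \<alpha>" using emb_pos[OF assms(1) lab h(2)] unfolding p_def by simp
    then show "p r' = 0" using emb_pos[OF assms(1) lab, of r'] h unfolding p_def by simp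
  qed
  have frozen: "\<And>u r v. u<L \<Longrightarrow> r<L \<Longrightarrow> 1 \<le> v \<Longrightarrow> p u = v \<Longrightarrow> g u = v \<Longrightarrow> p r \<le> v \<Longrightarrow> v < g r \<Longrightarrow> r < u"
    using process_frozen[OF pw0] by blast
  have nc: "nc_border_strip S" using assms(4) unfolding S_def .
  have N1: "\<And>r r'. r < L \<Longrightarrow> p r < 1 \<Longrightarrow> 2 \<le> g r \<Longrightarrow> r' < L \<Longrightarrow> p r' < 1 \<Longrightarrow> r' \<le> r"
  proof -
    fix r r' assume h: "r < L" "p r < 1" "2 \<le> g r" "r' < L" "p r' < 1"
    have "(Suc r, 1) \<in> S" "(Suc r, 2) \<in> S" "(Suc r', 1) \<in> S" using Smem' h gpos[of r'] by auto
    then have "Suc r' \<le> Suc r" using nc unfolding nc_border_strip_def by blast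
    then show "r' \<le> r" by simp
  qed
  have N2: "\<And>j r r'. 2 \<le> j \<Longrightarrow> r < L \<Longrightarrow> p r < j \<Longrightarrow> Suc j \<le> g r \<Longrightarrow> r' < L \<Longrightarrow> p r' < j \<Longrightarrow> j \<le> g r' \<Longrightarrow> r \<le> r'"
  proof -
    fix j r r' assume h: "2 \<le> j" "r < L" "p r < j" "Suc j \<le> g r" "r' < L" "p r' < j" "j \<le> g r'"
    have "(Suc r, j) \<in> S" "(Suc r, j + 1) \<in> S" "(Suc r', j) \<in> S" using Smem' h by auto
    then have "Suc r \<le> Suc r'" using nc h(1) unfolding nc_border_strip_def by blast
    then show "r \<le> r'" by simp
  qed
  define C where "C = {j. \<exists>r<L. p r < j \<and> j \<le> g r}"
  have suppC: "supp S = C"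
  proof (intro set_eqI iffI)
    fix j assume "j \<in> supp S"
    then obtain i where "(i, j) \<in> S" unfolding supp_def by force
    then show "j \<in> C" using Smem unfolding C_def by blast
  next
    fix j assume "j \<in> C"
    then obtain r where "r < L" "p r < j" "j \<le> g r" unfolding C_def by blast
    then have "(Suc r, j) \<in> S" using Smem' by simp
    then show "j \<in> supp S" unfolding supp_def by force
  qed
  have Cne: "C \<noteq> {}"
  proof -
    obtain j where "j \<in> set w0" using w0(1) by (cases w0) auto
    then have "0 < count_list w0 j" by (metis count_list_0_iff neq0_conv)
    then have "0 < card {r. r < L \<and> p r < j \<and> j \<le> g r}" using process_count[OF pw0] by simp
    then have "\<exists>r<L. p r < j \<and> j \<le> g r" by (rule card_pos_ex)
    then show ?thesis unfolding C_def by blast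
  qed
  have Cfin: "finite C"
  proof -
    have "C \<subseteq> (\<Union>r\<in>{..<L}. {..g r})" unfolding C_def by auto
    then show ?thesis by (rule finite_subset) simp
  qed
  define a where "a = Min C"
  define b where "b = Max C"
  have aC: "a \<in> C" "b \<in> C" unfolding a_def b_def using Cne Cfin by auto
  have a1: "1 \<le> a" using aC unfolding C_def by auto
  have ab: "a \<le> b" using aC Cfin unfolding b_def by simp
  have isup: "interval_shape S" using nc unfolding nc_border_strip_def by blast
  have supp: "\<And>j. (\<exists>r<L. p r < j \<and> j \<le> g r) \<longleftrightarrow> a \<le> j \<and> j \<le> b"
  proof
    fix j assume "\<exists>r<L. p r < j \<and> j \<le> g r"
    then have "j \<in> C" unfolding C_def by blast
    then show "a \<le> j \<and> j \<le> b" unfolding a_def b_def using Cfin by simp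
  next
    fix j assume "a \<le> j \<and> j \<le> b"
    then have "j \<in> supp S" using isup aC suppC unfolding interval_shape_def by blast
    then show "\<exists>r<L. p r < j \<and> j \<le> g r" using suppC unfolding C_def by blast
  qed
  interpret st: strip L p g a b
  proof
    show "\<And>r. L \<le> r \<Longrightarrow> p r = 0 \<and> g r = 0" by (fact out)
    show "\<And>r. r < L \<Longrightarrow> 1 \<le> g r" by (fact gpos)
    show "\<And>r. p r \<le> g r" by (fact pg)
    show "\<And>r r'. r' \<le> r \<Longrightarrow> r < L \<Longrightarrow> p r = 0 \<Longrightarrow> p r' = 0" by (fact prefix)
    show "\<And>u r v. u<L \<Longrightarrow> r<L \<Longrightarrow> 1 \<le> v \<Longrightarrow> p u = v \<Longrightarrow> g u = v \<Longrightarrow> p r \<le> v \<Longrightarrow> v < g r \<Longrightarrow> r < u" by (fact frozen)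
    show "\<And>r r'. r < L \<Longrightarrow> p r < 1 \<Longrightarrow> 2 \<le> g r \<Longrightarrow> r' < L \<Longrightarrow> p r' < 1 \<Longrightarrow> r' \<le> r" by (fact N1)
    show "\<And>j r r'. 2 \<le> j \<Longrightarrow> r < L \<Longrightarrow> p r < j \<Longrightarrow> Suc j \<le> g r \<Longrightarrow> r' < L \<Longrightarrow> p r' < j \<Longrightarrow> j \<le> g r' \<Longrightarrow> r \<le> r'" by (fact N2)
    show "1 \<le> a" by (fact a1)
    show "a \<le> b" by (fact ab)
    show "\<And>j. (\<exists>r<L. p r < j \<and> j \<le> g r) \<longleftrightarrow> a \<le> j \<and> j \<le> b" by (fact supp)
  qed
  have Sj: "\<And>i j. (i, j) \<in> S \<longleftrightarrow> (\<exists>r. i = Suc r \<and> r \<in> st.R j)"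
  proof -
    fix i j show "(i, j) \<in> S \<longleftrightarrow> (\<exists>r. i = Suc r \<and> r \<in> st.R j)"
      using Smem[of i j] unfolding st.R_def by (cases i) auto
  qed
  have NEeq: "NE S = {j. st.NEc j}"
  proof (intro set_eqI iffI)
    fix j assume "j \<in> NE S"
    then have h: "j \<in> supp S" "\<exists>i. (i, j + 1) \<in> S" "\<forall>i1 i2. (i1, j + 1) \<in> S \<and> (i2, j) \<in> S \<longrightarrow> i1 < i2"
      unfolding NE_def by auto
    have "st.R j \<noteq> {}" using h(1) suppC unfolding C_def st.R_def by auto
    moreover have "st.R (Suc j) \<noteq> {}" using h(2) Sj by auto
    moreover have "\<forall>r1\<in>st.R (Suc j). \<forall>r2\<in>st.R j. r1 < r2"
    proof (intro ballI)
      fix r1 r2 assume "r1 \<in> st.R (Suc j)" "r2 \<in> st.R j"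
      then have "(Suc r1, j + 1) \<in> S" "(Suc r2, j) \<in> S" using Sj by auto
      then show "r1 < r2" using h(3) by fastforce
    qed
    ultimately show "j \<in> {j. st.NEc j}" unfolding st.NEc_def by simp
  next
    fix j assume "j \<in> {j. st.NEc j}"
    then have h: "st.R j \<noteq> {}" "st.R (Suc j) \<noteq> {}" "\<forall>r1\<in>st.R (Suc j). \<forall>r2\<in>st.R j. r1 < r2"
      unfolding st.NEc_def by auto
    have "j \<in> supp S" using h(1) suppC unfolding C_def st.R_def by auto
    moreover have "\<exists>i. (i, j + 1) \<in> S" using h(2) Sj by auto
    moreover have "\<forall>i1 i2. (i1, j + 1) \<in> S \<and> (i2, j) \<in> S \<longrightarrow> i1 < i2"
    proof (intro allI impI)
      fix i1 i2 assume "(i1, j + 1) \<in> S \<and> (i2, j) \<in> S"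
      then obtain r1 r2 where "i1 = Suc r1" "r1 \<in> st.R (Suc j)" "i2 = Suc r2" "r2 \<in> st.R j" using Sj by fastforce
      then show "i1 < i2" using h(3) by simp
    qed
    ultimately show "j \<in> NE S" unfolding NE_def by simp
  qed
  have cardS: "card S = sum st.cnt {a..b}"
  proof -
    have "S = (\<lambda>(j, r). (Suc r, j)) ` (SIGMA j:{a..b}. st.R j)"
    proof (intro set_eqI iffI)
      fix x assume "x \<in> S"
      then obtain i j where x: "x = (i, j)" "(i, j) \<in> S" by (cases x) auto
      then obtain r where r: "i = Suc r" "r \<in> st.R j" using Sj by blast
      then have "a \<le> j \<and> j \<le> b" using st.R_ne by blast
      then show "x \<in> (\<lambda>(j, r). (Suc r, j)) ` (SIGMA j:{a..b}. st.R j)" using x r by force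
    next
      fix x assume "x \<in> (\<lambda>(j, r). (Suc r, j)) ` (SIGMA j:{a..b}. st.R j)"
      then obtain j r where "x = (Suc r, j)" "r \<in> st.R j" by (auto simp: image_iff)
      then show "x \<in> S" using Sj by simp
    qed
    moreover have "inj_on (\<lambda>(j, r). (Suc r, j)) (SIGMA j:{a..b}. st.R j)" by (auto simp: inj_on_def)
    ultimately have "card S = card (SIGMA j:{a..b}. st.R j)" by (simp add: card_image)
    also have "\<dots> = sum st.cnt {a..b}" unfolding st.cnt_def using st.R_fin by simp
    finally show ?thesis .
  qed
  have "{w \<in> CRHW n. apply_word w \<alpha> = Some \<beta>} = {w \<in> CRHW (sum st.cnt {a..b}). process L w p = Some g}"
    using iff cardS assms(5) unfolding S_def by simp
  then show ?thesis using st.main_locale NEeq unfolding S_def by simp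
qed


end
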